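(* The bialgebra $\mathcal{T}op$ is isomorphic to a shuffle twisted bialgebra $(\cot(\mathcal{Q}),\sqcup\!\sqcup,\Delta)$ for some species $\mathcal{Q}$.
   Context: $\mathcal{T}op[A]$ is the vector space generated by finite topologies (quasi-posets) on $A$; it is a twisted bialgebra with product disjoint union and coproduct $\Delta_{A,B}(T)=T_{\mid A}\otimes T_{\mid B}$ if $B$ is an open set (upward-closed set) of $T$, $0$ otherwise. For a species $\mathcal{Q}$ with $\mathcal{Q}[\emptyset]=(0)$, $\cot(\mathcal{Q})[A]=\bigoplus_{(A_1,\ldots,A_k)}\mathcal{Q}[A_1]\otimes\cdots\otimes\mathcal{Q}[A_k]$ (sum over set compositions of $A$) with deconcatenation coproduct $\Delta$, and the shuffle product $\sqcup\!\sqcup$ is $x_1\ldots x_k\,\sqcup\!\sqcup\,x_{k+1}\ldots x_{k+l}=\sum_\sigma x_{\sigma^{-1}(1)}\ldots x_{\sigma^{-1}(k+l)}$ over permutations $\sigma$ of $\{1,\ldots,k+l\}$ increasing on $\{1,\ldots,k\}$ and on $\{k+1,\ldots,k+l\}$. *)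

theory Defs
  imports Main
begin

text \<open>A vector of the free vector space with basis S is a finitely supported
  coefficient function supported in S.\<close>

definition supp :: "('x \<Rightarrow> 'k::zero) \<Rightarrow> 'x set" where
  "supp f = {x. f x \<noteq> 0}"

definition finsupp_on :: "'x set \<Rightarrow> ('x \<Rightarrow> 'k::zero) \<Rightarrow> bool" where
  "finsupp_on S f \<longleftrightarrow> finite (supp f) \<and> supp f \<subseteq> S"

text \<open>Linear extension: the image of the vector c under the linear map sending
  basis element x to F x.\<close>

definition lincomb :: "('x \<Rightarrow> 'k::comm_ring_1) \<Rightarrow> ('x \<Rightarrow> 'y \<Rightarrow> 'k) \<Rightarrow> ('y \<Rightarrow> 'k)" where
  "lincomb c F = (\<lambda>y. \<Sum>x\<in>supp c. c x * F x y)"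

definition delta_vec :: "'x \<Rightarrow> ('x \<Rightarrow> 'k::zero_neq_one)" where
  "delta_vec x = (\<lambda>y. if y = x then 1 else 0)"

text \<open>Finite sets are modelled as finite subsets of nat. A topology on A is
  identified with its quasi-order (preorder) R on A, (x,y) \<in> R meaning x \<le> y.\<close>

definition quasi_poset_on :: "nat set \<Rightarrow> nat rel \<Rightarrow> bool" where
  "quasi_poset_on A R \<longleftrightarrow> R \<subseteq> A \<times> A \<and> (\<forall>x\<in>A. (x, x) \<in> R) \<and> trans R"

definition top_basis :: "nat set \<Rightarrow> nat rel set" where
  "top_basis A = {R. quasi_poset_on A R}"

text \<open>Open sets = upward closed sets.\<close>
definition upclosed :: "nat rel \<Rightarrow> nat set \<Rightarrow> bool" where
  "upclosed R B \<longleftrightarrow> (\<forall>x y. (x, y) \<in> R \<longrightarrow> x \<in> B \<longrightarrow> y \<in> B)"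

definition restr :: "nat rel \<Rightarrow> nat set \<Rightarrow> nat rel" where
  "restr R A = R \<inter> (A \<times> A)"

definition top_act :: "(nat \<Rightarrow> nat) \<Rightarrow> nat rel \<Rightarrow> nat rel" where
  "top_act \<sigma> R = (\<lambda>(x, y). (\<sigma> x, \<sigma> y)) ` R"

text \<open>A species Q is given by: QB A, a set of labels (natural numbers) indexing a
  basis of Q[A]; and Qact \<sigma> A b, the image under Q[\<sigma>] of the basis element b of
  Q[A], for a bijection \<sigma> : A \<rightarrow> \<sigma> ` A, written in the basis of Q[\<sigma> ` A].\<close>

definition species :: "(nat set \<Rightarrow> nat set) \<Rightarrow> ((nat \<Rightarrow> nat) \<Rightarrow> nat set \<Rightarrow> nat \<Rightarrow> nat \<Rightarrow> 'k::comm_ring_1) \<Rightarrow> bool" where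
  "species QB Qact \<longleftrightarrow>
     (\<forall>A B \<sigma> b. finite A \<and> bij_betw \<sigma> A B \<and> b \<in> QB A \<longrightarrow> finsupp_on (QB B) (Qact \<sigma> A b)) \<and>
     (\<forall>A \<sigma> \<tau> b. finite A \<and> (\<forall>x\<in>A. \<sigma> x = \<tau> x) \<longrightarrow> Qact \<sigma> A b = Qact \<tau> A b) \<and>
     (\<forall>A b. finite A \<and> b \<in> QB A \<longrightarrow> Qact id A b = delta_vec b) \<and>
     (\<forall>A B C \<sigma> \<tau> b. finite A \<and> bij_betw \<sigma> A B \<and> bij_betw \<tau> B C \<and> b \<in> QB A \<longrightarrow>
        Qact (\<tau> \<circ> \<sigma>) A b = lincomb (Qact \<sigma> A b) (Qact \<tau> B))"

text \<open>Basis of cot(Q)[A]: words (A_1,b_1)...(A_k,b_k) where (A_1,...,A_k) is a set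
  composition of A and b_i is a basis element of Q[A_i]; such a word stands for the
  tensor b_1 \<otimes> ... \<otimes> b_k \<in> Q[A_1] \<otimes> ... \<otimes> Q[A_k].\<close>

type_synonym word = "(nat set \<times> nat) list"

definition set_composition :: "nat set \<Rightarrow> nat set list \<Rightarrow> bool" where
  "set_composition A As \<longleftrightarrow>
     (\<forall>X\<in>set As. finite X \<and> X \<noteq> {}) \<and>
     (\<forall>i<length As. \<forall>j<length As. i \<noteq> j \<longrightarrow> As ! i \<inter> As ! j = {}) \<and>
     \<Union>(set As) = A"

definition cot_basis :: "(nat set \<Rightarrow> nat set) \<Rightarrow> nat set \<Rightarrow> word set" where
  "cot_basis QB A = {w. set_composition A (map fst w) \<and> (\<forall>(X, b)\<in>set w. b \<in> QB X)}"

text \<open>Species structure of cot(Q): Q[\<sigma>] \<otimes> ... \<otimes> Q[\<sigma>] on each tensor factor.\<close>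
definition cot_act :: "((nat \<Rightarrow> nat) \<Rightarrow> nat set \<Rightarrow> nat \<Rightarrow> nat \<Rightarrow> 'k::comm_ring_1)
    \<Rightarrow> (nat \<Rightarrow> nat) \<Rightarrow> word \<Rightarrow> word \<Rightarrow> 'k" where
  "cot_act Qact \<sigma> w = (\<lambda>w'.
     if map fst w' = map (\<lambda>p. \<sigma> ` fst p) w
     then (\<Prod>i<length w. Qact \<sigma> (fst (w ! i)) (snd (w ! i)) (snd (w' ! i)))
     else 0)"

definition shuffle_prod :: "(word \<Rightarrow> 'k::comm_ring_1) \<Rightarrow> (word \<Rightarrow> 'k) \<Rightarrow> (word \<Rightarrow> 'k)" where
  "shuffle_prod a b = (\<lambda>w. \<Sum>u\<in>supp a. \<Sum>v\<in>supp b.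
      a u * b v * (if w \<in> shuffles u v then 1 else 0))"

text \<open>\<phi> A R is the image of the basis element R of Top[A] in cot(Q)[A]; the
  family of linear maps is the linear extension.\<close>

definition top_cot_iso :: "(nat set \<Rightarrow> nat set) \<Rightarrow> ((nat \<Rightarrow> nat) \<Rightarrow> nat set \<Rightarrow> nat \<Rightarrow> nat \<Rightarrow> 'k::comm_ring_1)
    \<Rightarrow> (nat set \<Rightarrow> nat rel \<Rightarrow> word \<Rightarrow> 'k) \<Rightarrow> bool" where
  "top_cot_iso QB Qact \<phi> \<longleftrightarrow>
     \<comment> \<open>each \<phi>_A maps Top[A] into cot(Q)[A] ...\<close>
     (\<forall>A R. finite A \<and> R \<in> top_basis A \<longrightarrow> finsupp_on (cot_basis QB A) (\<phi> A R)) \<and>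
     \<comment> \<open>... and is a linear bijection\<close>
     (\<forall>A. finite A \<longrightarrow> bij_betw (\<lambda>x. lincomb x (\<phi> A))
          {x. finsupp_on (top_basis A) x} {y. finsupp_on (cot_basis QB A) y}) \<and>
     \<comment> \<open>naturality (morphism of species)\<close>
     (\<forall>A B \<sigma> R. finite A \<and> bij_betw \<sigma> A B \<and> R \<in> top_basis A \<longrightarrow>
          \<phi> B (top_act \<sigma> R) = lincomb (\<phi> A R) (cot_act Qact \<sigma>)) \<and>
     \<comment> \<open>unit\<close>
     \<phi> {} {} = delta_vec [] \<and>
     \<comment> \<open>compatibility with the products (disjoint union / shuffle)\<close>
     (\<forall>A B R S. finite A \<and> finite B \<and> A \<inter> B = {} \<and> R \<in> top_basis A \<and> S \<in> top_basis B \<longrightarrow>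
          \<phi> (A \<union> B) (R \<union> S) = shuffle_prod (\<phi> A R) (\<phi> B S)) \<and>
     \<comment> \<open>compatibility with the coproducts: the coefficient of u \<otimes> v in
         \<Delta>_{A,B}(\<phi>_{A \<union> B} T) equals that in (\<phi>_A \<otimes> \<phi>_B)(\<Delta>_{A,B} T)\<close>
     (\<forall>A B R. finite A \<and> finite B \<and> A \<inter> B = {} \<and> R \<in> top_basis (A \<union> B) \<longrightarrow>
          (\<forall>u\<in>cot_basis QB A. \<forall>v\<in>cot_basis QB B.
             \<phi> (A \<union> B) R (u @ v) =
               (if upclosed R B then \<phi> A (restr R A) u * \<phi> B (restr R B) v else 0)))"

end

theory Submission
  imports Defs "HOL-Library.Nat_Bijection" "HOL-Library.Function_Algebras" "HOL.Vector_Spaces"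
begin

definition code :: "nat rel \<Rightarrow> nat" where
  "code T = set_encode (prod_encode ` T)"

definition decode :: "nat \<Rightarrow> nat rel" where
  "decode b = prod_decode ` set_decode b"

lemma decode_code: "finite T \<Longrightarrow> decode (code T) = T"
  unfolding code_def decode_def
  by (simp add: image_image)

lemma code_inj: "finite T \<Longrightarrow> finite T' \<Longrightarrow> code T = code T' \<Longrightarrow> T = T'"
  by (metis decode_code)

definition indec :: "nat set \<Rightarrow> nat rel \<Rightarrow> bool" where
  "indec A T \<longleftrightarrow> A \<noteq> {} \<and> (\<forall>C B. C \<union> B = A \<longrightarrow> C \<inter> B = {} \<longrightarrow> C \<noteq> {} \<longrightarrow> B \<noteq> {}
      \<longrightarrow> \<not> (C \<times> B \<subseteq> T \<and> T \<inter> (B \<times> C) = {}))"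

lemma restr_restr: "restr (restr R A) B = restr R (A \<inter> B)"
  unfolding restr_def by auto

lemma restr_sub: "restr R A \<subseteq> A \<times> A"
  unfolding restr_def by auto

lemma restr_id: "R \<subseteq> A \<times> A \<Longrightarrow> restr R A = R"
  unfolding restr_def by auto

lemma top_basis_sub: "R \<in> top_basis A \<Longrightarrow> R \<subseteq> A \<times> A"
  unfolding top_basis_def quasi_poset_on_def by auto

lemma top_basis_restr: "R \<in> top_basis A \<Longrightarrow> B \<subseteq> A \<Longrightarrow> restr R B \<in> top_basis B"
  unfolding top_basis_def quasi_poset_on_def restr_def trans_def by blast

lemma finite_top_basis: "finite A \<Longrightarrow> finite (top_basis A)"
proof -
  assume "finite A"
  have "top_basis A \<subseteq> Pow (A \<times> A)" using top_basis_sub by auto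
  then show ?thesis using \<open>finite A\<close> by (meson finite_Pow_iff finite_SigmaI finite_subset)
qed

lemma top_basis_finite_rel: "finite A \<Longrightarrow> R \<in> top_basis A \<Longrightarrow> finite R"
  using top_basis_sub by (meson finite_SigmaI finite_subset)

lemma top_basis_empty: "top_basis {} = {{}}"
  unfolding top_basis_def quasi_poset_on_def trans_def by auto

subsection \<open>Relabelling\<close>

lemma top_act_id: "top_act id R = R"
  unfolding top_act_def by auto

lemma top_act_comp: "top_act (\<tau> \<circ> \<sigma>) R = top_act \<tau> (top_act \<sigma> R)"
  unfolding top_act_def by (auto simp: image_image case_prod_beta)

lemma top_act_cong: "(\<forall>x\<in>A. \<sigma> x = \<tau> x) \<Longrightarrow> R \<subseteq> A \<times> A \<Longrightarrow> top_act \<sigma> R = top_act \<tau> R"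
  unfolding top_act_def by (rule image_cong) (auto simp: split_beta)

lemma top_act_mem:
  assumes "inj_on \<sigma> A" "R \<subseteq> A \<times> A" "x \<in> A" "y \<in> A"
  shows "(\<sigma> x, \<sigma> y) \<in> top_act \<sigma> R \<longleftrightarrow> (x, y) \<in> R"
proof
  assume "(\<sigma> x, \<sigma> y) \<in> top_act \<sigma> R"
  then obtain a b where ab: "(a, b) \<in> R" "\<sigma> x = \<sigma> a" "\<sigma> y = \<sigma> b"
    unfolding top_act_def by auto
  then have "a \<in> A" "b \<in> A" using assms(2) by auto
  then have "a = x" "b = y" using ab assms(1,3,4) unfolding inj_on_def by auto
  then show "(x, y) \<in> R" using ab by simp
next
  assume "(x, y) \<in> R"
  then show "(\<sigma> x, \<sigma> y) \<in> top_act \<sigma> R" unfolding top_act_def by force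
qed

lemma top_act_sub: "R \<subseteq> A \<times> A \<Longrightarrow> top_act \<sigma> R \<subseteq> (\<sigma> ` A) \<times> (\<sigma> ` A)"
  unfolding top_act_def by auto

lemma top_act_memE:
  assumes "p \<in> top_act \<sigma> R"
  obtains x y where "p = (\<sigma> x, \<sigma> y)" "(x, y) \<in> R"
  using assms unfolding top_act_def by auto

lemma top_act_inv:
  assumes "inj_on \<sigma> A" "R \<subseteq> A \<times> A"
  shows "top_act (inv_into A \<sigma>) (top_act \<sigma> R) = R"
proof -
  have "top_act (inv_into A \<sigma>) (top_act \<sigma> R) = top_act (inv_into A \<sigma> \<circ> \<sigma>) R"
    by (simp add: top_act_comp)
  also have "\<dots> = top_act id R"
    using assms by (intro top_act_cong[of A]) auto
  finally show ?thesis by (simp add: top_act_id)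
qed

lemma top_act_inj:
  assumes "inj_on \<sigma> A" "R \<subseteq> A \<times> A" "S \<subseteq> A \<times> A" "top_act \<sigma> R = top_act \<sigma> S"
  shows "R = S"
  by (metis assms top_act_inv)

lemma top_act_restr:
  assumes "inj_on \<sigma> A" "R \<subseteq> A \<times> A" "X \<subseteq> A"
  shows "restr (top_act \<sigma> R) (\<sigma> ` X) = top_act \<sigma> (restr R X)"
proof (intro set_eqI iffI)
  fix p assume "p \<in> restr (top_act \<sigma> R) (\<sigma> ` X)"
  then have p1: "p \<in> top_act \<sigma> R" and p2: "p \<in> \<sigma> ` X \<times> \<sigma> ` X" unfolding restr_def by auto
  from p1 obtain a b where ab0: "p = (\<sigma> a, \<sigma> b)" "(a, b) \<in> R" by (rule top_act_memE)
  then have ab: "p = (\<sigma> a, \<sigma> b)" "(a, b) \<in> R" "\<sigma> a \<in> \<sigma> ` X" "\<sigma> b \<in> \<sigma> ` X" using p2 by auto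
  have "a \<in> A" "b \<in> A" using ab(2) assms(2) by auto
  then have "a \<in> X" "b \<in> X" using ab(3,4) assms(1,3) unfolding inj_on_def by auto
  then show "p \<in> top_act \<sigma> (restr R X)" using ab unfolding restr_def top_act_def by force
next
  fix p assume "p \<in> top_act \<sigma> (restr R X)"
  then show "p \<in> restr (top_act \<sigma> R) (\<sigma> ` X)" unfolding restr_def top_act_def by force
qed

lemma top_act_upclosed:
  assumes "inj_on \<sigma> A" "R \<subseteq> A \<times> A" "X \<subseteq> A"
  shows "upclosed (top_act \<sigma> R) (\<sigma> ` X) \<longleftrightarrow> upclosed R X"
proof
  assume h: "upclosed (top_act \<sigma> R) (\<sigma> ` X)"
  show "upclosed R X" unfolding upclosed_def
  proof (intro allI impI)
    fix x y assume "(x, y) \<in> R" "x \<in> X"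
    then have "(\<sigma> x, \<sigma> y) \<in> top_act \<sigma> R" "y \<in> A" unfolding top_act_def using assms(2) by force+
    then have "\<sigma> y \<in> \<sigma> ` X" using h \<open>x \<in> X\<close> unfolding upclosed_def by blast
    then show "y \<in> X" using \<open>y \<in> A\<close> assms(1,3) unfolding inj_on_def by blast
  qed
next
  assume h: "upclosed R X"
  show "upclosed (top_act \<sigma> R) (\<sigma> ` X)" unfolding upclosed_def
  proof (intro allI impI)
    fix x y assume "(x, y) \<in> top_act \<sigma> R" "x \<in> \<sigma> ` X"
    then obtain a b where ab: "x = \<sigma> a" "y = \<sigma> b" "(a, b) \<in> R" unfolding top_act_def by auto
    have "a \<in> A" using ab(3) assms(2) by auto
    then have "a \<in> X" using ab(1) \<open>x \<in> \<sigma> ` X\<close> assms(1,3) unfolding inj_on_def by blast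
    then show "y \<in> \<sigma> ` X" using h ab unfolding upclosed_def by blast
  qed
qed

lemma top_act_basis:
  assumes "bij_betw \<sigma> A B" "R \<in> top_basis A"
  shows "top_act \<sigma> R \<in> top_basis B"
proof -
  have inj: "inj_on \<sigma> A" using bij_betw_imp_inj_on[OF assms(1)] .
  have img: "\<sigma> ` A = B" using bij_betw_imp_surj_on[OF assms(1)] .
  have sub: "R \<subseteq> A \<times> A" using assms(2) top_basis_sub by auto
  have refl: "\<forall>x\<in>A. (x, x) \<in> R" and tr: "trans R"
    using assms(2) unfolding top_basis_def quasi_poset_on_def by auto
  have "top_act \<sigma> R \<subseteq> B \<times> B" using top_act_sub[OF sub] img by auto
  moreover have "\<forall>x\<in>B. (x, x) \<in> top_act \<sigma> R"
    using refl img unfolding top_act_def by force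
  moreover have "trans (top_act \<sigma> R)"
  proof (rule transI)
    fix x y z assume 1: "(x, y) \<in> top_act \<sigma> R" and 2: "(y, z) \<in> top_act \<sigma> R"
    from 1 obtain a b where ab: "x = \<sigma> a" "y = \<sigma> b" "(a, b) \<in> R" unfolding top_act_def by auto
    from 2 obtain c d where cd: "y = \<sigma> c" "z = \<sigma> d" "(c, d) \<in> R" unfolding top_act_def by auto
    have "b = c" using ab cd sub inj unfolding inj_on_def by blast
    then have "(a, d) \<in> R" using ab cd tr unfolding trans_def by blast
    then show "(x, z) \<in> top_act \<sigma> R" using ab cd unfolding top_act_def by force
  qed
  ultimately show ?thesis unfolding top_basis_def quasi_poset_on_def by auto
qed

lemma indec_top_act:
  assumes "inj_on \<sigma> A" "R \<subseteq> A \<times> A" "indec A R"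
  shows "indec (\<sigma> ` A) (top_act \<sigma> R)"
proof -
  have ne: "A \<noteq> {}" using assms(3) indec_def by auto
  {
    fix C B assume h: "C \<union> B = \<sigma> ` A" "C \<inter> B = {}" "C \<noteq> {}" "B \<noteq> {}"
      "C \<times> B \<subseteq> top_act \<sigma> R" "top_act \<sigma> R \<inter> (B \<times> C) = {}"
    define C' where "C' = A \<inter> \<sigma> -` C"
    define B' where "B' = A \<inter> \<sigma> -` B"
    have "C' \<union> B' = A" using h(1) unfolding C'_def B'_def by auto
    moreover have "C' \<inter> B' = {}" using h(2) unfolding C'_def B'_def by auto
    moreover have "C' \<noteq> {}"
    proof -
      obtain c where "c \<in> C" using h(3) by auto
      then have "c \<in> \<sigma> ` A" using h(1) by auto
      then obtain a where "a \<in> A" "\<sigma> a = c" by auto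
      then have "a \<in> C'" using \<open>c \<in> C\<close> unfolding C'_def by auto
      then show ?thesis by auto
    qed
    moreover have "B' \<noteq> {}"
    proof -
      obtain c where "c \<in> B" using h(4) by auto
      then have "c \<in> \<sigma> ` A" using h(1) by auto
      then obtain a where "a \<in> A" "\<sigma> a = c" by auto
      then have "a \<in> B'" using \<open>c \<in> B\<close> unfolding B'_def by auto
      then show ?thesis by auto
    qed
    moreover have "C' \<times> B' \<subseteq> R"
    proof
      fix p assume "p \<in> C' \<times> B'"
      then obtain x y where p: "p = (x, y)" "x \<in> A" "y \<in> A" "\<sigma> x \<in> C" "\<sigma> y \<in> B"
        unfolding C'_def B'_def by auto
      then have "(\<sigma> x, \<sigma> y) \<in> top_act \<sigma> R" using h(5) by auto
      then show "p \<in> R" using top_act_mem[OF assms(1,2)] p by auto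
    qed
    moreover have "R \<inter> (B' \<times> C') = {}"
    proof (rule ccontr)
      assume "R \<inter> (B' \<times> C') \<noteq> {}"
      then obtain x y where "(x, y) \<in> R" "x \<in> B'" "y \<in> C'" by auto
      then have "(\<sigma> x, \<sigma> y) \<in> top_act \<sigma> R" "\<sigma> x \<in> B" "\<sigma> y \<in> C"
        unfolding top_act_def C'_def B'_def by auto
      then show False using h(6) by auto
    qed
    ultimately have False using assms(3) unfolding indec_def by blast
  }
  then show ?thesis unfolding indec_def using ne by blast
qed


lemma supp_delta: "supp (delta_vec x :: 'a \<Rightarrow> 'k::zero_neq_one) = {x}"
  unfolding supp_def delta_vec_def by auto

lemma lincomb_delta: "lincomb (delta_vec x) F = F x"
  unfolding lincomb_def supp_delta by (rule ext) (simp add: delta_vec_def)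

lemma lincomb_superset:
  assumes "finite S" "supp c \<subseteq> S"
  shows "lincomb c F y = (\<Sum>x\<in>S. c x * F x y)"
  unfolding lincomb_def
  by (rule sum.mono_neutral_left) (use assms in \<open>auto simp: supp_def\<close>)

definition QBt :: "nat set \<Rightarrow> nat set" where
  "QBt A = code ` {T. finite A \<and> T \<in> top_basis A \<and> indec A T}"

definition Qactt :: "(nat \<Rightarrow> nat) \<Rightarrow> nat set \<Rightarrow> nat \<Rightarrow> nat \<Rightarrow> 'k::comm_ring_1" where
  "Qactt \<sigma> A b = (if b \<in> QBt A then delta_vec (code (top_act \<sigma> (decode b))) else (\<lambda>_. 0))"

lemma QBtD:
  assumes "b \<in> QBt A"
  shows "finite A" "decode b \<in> top_basis A" "indec A (decode b)" "code (decode b) = b"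
proof -
  obtain T where T: "b = code T" "finite A" "T \<in> top_basis A" "indec A T"
    using assms unfolding QBt_def by auto
  have "finite T" using T top_basis_finite_rel by auto
  then have "decode b = T" using T decode_code by auto
  then show "finite A" "decode b \<in> top_basis A" "indec A (decode b)" "code (decode b) = b"
    using T by auto
qed

lemma QBtI: "finite A \<Longrightarrow> T \<in> top_basis A \<Longrightarrow> indec A T \<Longrightarrow> code T \<in> QBt A"
  unfolding QBt_def by auto

lemma QBt_empty: "QBt {} = {}"
  unfolding QBt_def indec_def by auto

lemma QBt_act:
  assumes "bij_betw \<sigma> A B" "b \<in> QBt A"
  shows "code (top_act \<sigma> (decode b)) \<in> QBt B"
    "decode (code (top_act \<sigma> (decode b))) = top_act \<sigma> (decode b)"
proof -
  have fA: "finite A" and T: "decode b \<in> top_basis A" "indec A (decode b)" using QBtD[OF assms(2)] by auto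
  have fB: "finite B" using fA assms(1) bij_betw_finite by blast
  have tb: "top_act \<sigma> (decode b) \<in> top_basis B" using top_act_basis[OF assms(1) T(1)] .
  have "indec (\<sigma> ` A) (top_act \<sigma> (decode b))"
    using indec_top_act[OF bij_betw_imp_inj_on[OF assms(1)] top_basis_sub[OF T(1)] T(2)] .
  then have "indec B (top_act \<sigma> (decode b))" using bij_betw_imp_surj_on[OF assms(1)] by simp
  then show "code (top_act \<sigma> (decode b)) \<in> QBt B" using QBtI fB tb by auto
  show "decode (code (top_act \<sigma> (decode b))) = top_act \<sigma> (decode b)"
    using decode_code top_basis_finite_rel[OF fB tb] by auto
qed

lemma species_Q: "species QBt (Qactt :: _ \<Rightarrow> _ \<Rightarrow> _ \<Rightarrow> _ \<Rightarrow> 'k::comm_ring_1)"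
  unfolding species_def
proof (intro conjI allI impI)
  fix A B :: "nat set" and \<sigma> :: "nat \<Rightarrow> nat" and b :: nat assume h: "finite A \<and> bij_betw \<sigma> A B \<and> b \<in> QBt A"
  then show "finsupp_on (QBt B) (Qactt \<sigma> A b :: _ \<Rightarrow> 'k)"
    unfolding finsupp_on_def Qactt_def using QBt_act[of \<sigma> A B b] by (simp add: supp_delta)
next
  fix A :: "nat set" and \<sigma> \<tau> :: "nat \<Rightarrow> nat" and b :: nat assume h: "finite A \<and> (\<forall>x\<in>A. \<sigma> x = \<tau> x)"
  show "(Qactt \<sigma> A b :: _ \<Rightarrow> 'k) = Qactt \<tau> A b"
  proof (cases "b \<in> QBt A")
    case True
    then have "decode b \<subseteq> A \<times> A" using QBtD top_basis_sub by blast
    then have "top_act \<sigma> (decode b) = top_act \<tau> (decode b)" using h top_act_cong by blast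
    then show ?thesis unfolding Qactt_def by simp
  qed (simp add: Qactt_def)
next
  fix A :: "nat set" and b :: nat assume h: "finite A \<and> b \<in> QBt A"
  then show "(Qactt id A b :: _ \<Rightarrow> 'k) = delta_vec b"
    unfolding Qactt_def using QBtD[of b A] by (simp add: top_act_id)
next
  fix A B C :: "nat set" and \<sigma> \<tau> :: "nat \<Rightarrow> nat" and b :: nat assume h: "finite A \<and> bij_betw \<sigma> A B \<and> bij_betw \<tau> B C \<and> b \<in> QBt A"
  then have b1: "code (top_act \<sigma> (decode b)) \<in> QBt B"
    and b2: "decode (code (top_act \<sigma> (decode b))) = top_act \<sigma> (decode b)"
    using QBt_act[of \<sigma> A B b] by auto
  show "(Qactt (\<tau> \<circ> \<sigma>) A b :: _ \<Rightarrow> 'k) = lincomb (Qactt \<sigma> A b) (Qactt \<tau> B)"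
    using h b1 b2 unfolding Qactt_def by (simp add: lincomb_delta top_act_comp)
qed


function Ea :: "nat \<Rightarrow> nat set \<Rightarrow> nat rel \<Rightarrow> nat rel \<Rightarrow> 'k::field" where
  "Ea a A R T = (if finite A then (if T = R then 1 else 0) -
     (\<Sum>B\<in>{B. B \<subseteq> A \<and> a \<in> B \<and> B \<noteq> A \<and> upclosed R B}.
        if restr T (A - B) = restr R (A - B) \<and> T \<subseteq> (A - B) \<times> (A - B) \<union> B \<times> B
        then Ea a B (restr R B) (restr T B) else 0) else 0)"
  by pat_completeness auto
termination
  by (relation "measure (\<lambda>(a, A, R, T). card A)") (auto intro: psubset_card_mono)

declare Ea.simps[simp del]

lemma kill_cond:
  assumes A: "A = X1 \<union> X2" and dj: "X1 \<inter> X2 = {}" and B: "B \<subseteq> X1" and D: "D \<subseteq> X1 \<times> X1 \<union> X2 \<times> X2"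
  shows "(restr T (A - B) = restr D (A - B) \<and> T \<subseteq> (A - B) \<times> (A - B) \<union> B \<times> B) \<longleftrightarrow>
    ((restr T X2 = restr D X2 \<and> T \<subseteq> X1 \<times> X1 \<union> X2 \<times> X2) \<and>
     (restr (restr T X1) (X1 - B) = restr (restr D X1) (X1 - B) \<and>
      restr T X1 \<subseteq> (X1 - B) \<times> (X1 - B) \<union> B \<times> B))"
proof
  assume h: "restr T (A - B) = restr D (A - B) \<and> T \<subseteq> (A - B) \<times> (A - B) \<union> B \<times> B"
  have X2s: "X2 \<subseteq> A - B" using A dj B by blast
  have X1s: "X1 - B \<subseteq> A - B" using A by blast
  have "restr T X2 = restr (restr T (A - B)) X2" using X2s by (simp add: restr_restr Int_absorb1)
  also have "\<dots> = restr D X2" using h X2s by (simp add: restr_restr Int_absorb1)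
  finally have c1: "restr T X2 = restr D X2" .
  have c2: "T \<subseteq> X1 \<times> X1 \<union> X2 \<times> X2"
  proof
    fix p assume p: "p \<in> T"
    show "p \<in> X1 \<times> X1 \<union> X2 \<times> X2"
    proof (cases "p \<in> B \<times> B")
      case True then show ?thesis using B by blast
    next
      case False
      then have "p \<in> restr T (A - B)" using h p unfolding restr_def by blast
      then have "p \<in> D" using h unfolding restr_def by blast
      then show ?thesis using D by blast
    qed
  qed
  have "restr (restr T X1) (X1 - B) = restr (restr T (A - B)) (X1 - B)"
    using X1s by (simp add: restr_restr Int_absorb1 Int_absorb2 Int_commute)
  also have "\<dots> = restr (restr D X1) (X1 - B)"
    using h X1s by (simp add: restr_restr Int_absorb1 Int_absorb2 Int_commute)
  finally have c3: "restr (restr T X1) (X1 - B) = restr (restr D X1) (X1 - B)" .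
  have c4: "restr T X1 \<subseteq> (X1 - B) \<times> (X1 - B) \<union> B \<times> B"
    using h A unfolding restr_def by blast
  show "(restr T X2 = restr D X2 \<and> T \<subseteq> X1 \<times> X1 \<union> X2 \<times> X2) \<and>
     (restr (restr T X1) (X1 - B) = restr (restr D X1) (X1 - B) \<and>
      restr T X1 \<subseteq> (X1 - B) \<times> (X1 - B) \<union> B \<times> B)" using c1 c2 c3 c4 by blast
next
  assume h: "(restr T X2 = restr D X2 \<and> T \<subseteq> X1 \<times> X1 \<union> X2 \<times> X2) \<and>
     (restr (restr T X1) (X1 - B) = restr (restr D X1) (X1 - B) \<and>
      restr T X1 \<subseteq> (X1 - B) \<times> (X1 - B) \<union> B \<times> B)"
  then have c1: "restr T X2 = restr D X2" and c2: "T \<subseteq> X1 \<times> X1 \<union> X2 \<times> X2"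
    and c3: "restr T (X1 - B) = restr D (X1 - B)" and c4: "restr T X1 \<subseteq> (X1 - B) \<times> (X1 - B) \<union> B \<times> B"
    by (auto simp: restr_restr Int_absorb1 Int_absorb2 Int_commute)
  have g2: "T \<subseteq> (A - B) \<times> (A - B) \<union> B \<times> B"
  proof
    fix p assume p: "p \<in> T"
    then have "p \<in> X1 \<times> X1 \<or> p \<in> X2 \<times> X2" using c2 by blast
    then show "p \<in> (A - B) \<times> (A - B) \<union> B \<times> B"
    proof
      assume "p \<in> X1 \<times> X1"
      then have "p \<in> restr T X1" using p unfolding restr_def by blast
      then show ?thesis using c4 A by blast
    next
      assume "p \<in> X2 \<times> X2"
      then show ?thesis using A dj B by blast
    qed
  qed
  have g1: "restr T (A - B) = restr D (A - B)"
  proof (rule set_eqI)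
    fix p :: "nat \<times> nat"
    obtain x y where p: "p = (x, y)" by (cases p)
    show "p \<in> restr T (A - B) \<longleftrightarrow> p \<in> restr D (A - B)"
    proof (cases "x \<in> A - B \<and> y \<in> A - B")
      case False then show ?thesis unfolding restr_def p by blast
    next
      case True
      then have "(x \<in> X1 - B \<and> y \<in> X1 - B) \<or> (x \<in> X2 \<and> y \<in> X2) \<or> (x \<in> X1 \<and> y \<in> X2) \<or> (x \<in> X2 \<and> y \<in> X1)"
        using A by blast
      moreover
      have "(x, y) \<in> T \<longleftrightarrow> (x, y) \<in> D" if "x \<in> X1 - B" "y \<in> X1 - B"
        using c3 that unfolding restr_def by blast
      moreover
      have "(x, y) \<in> T \<longleftrightarrow> (x, y) \<in> D" if "x \<in> X2" "y \<in> X2"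
        using c1 that unfolding restr_def by blast
      moreover
      have "(x, y) \<notin> T \<and> (x, y) \<notin> D" if "(x \<in> X1 \<and> y \<in> X2) \<or> (x \<in> X2 \<and> y \<in> X1)"
        using c2 D dj that by blast
      ultimately show ?thesis using True unfolding restr_def p by blast
    qed
  qed
  show "restr T (A - B) = restr D (A - B) \<and> T \<subseteq> (A - B) \<times> (A - B) \<union> B \<times> B"
    using g1 g2 by blast
qed

lemma Ea_kill_aux:
  fixes a :: nat and T :: "nat rel"
  assumes IH: "\<And>A' X1' X2' D' T'. card A' < card A \<Longrightarrow> finite A' \<Longrightarrow> A' = X1' \<union> X2' \<Longrightarrow>
      X1' \<inter> X2' = {} \<Longrightarrow> X1' \<noteq> {} \<Longrightarrow> X2' \<noteq> {} \<Longrightarrow> D' \<subseteq> X1' \<times> X1' \<union> X2' \<times> X2' \<Longrightarrow> a \<in> A' \<Longrightarrow>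
      (Ea a A' D' T' :: 'k::field) = 0"
    and fin: "finite A" and A: "A = P \<union> Q" and dj: "P \<inter> Q = {}" and ne1: "P \<noteq> {}"
    and ne2: "Q \<noteq> {}" and D: "D \<subseteq> P \<times> P \<union> Q \<times> Q" and a: "a \<in> P"
  shows "(Ea a A D T :: 'k) = 0"
proof -
  define U where "U = restr D P"
  define T1 where "T1 = restr T P"
  define cond0 where "cond0 \<longleftrightarrow> restr T Q = restr D Q \<and> T \<subseteq> P \<times> P \<union> Q \<times> Q"
  define trm where "trm B = (if restr T (A - B) = restr D (A - B) \<and> T \<subseteq> (A - B) \<times> (A - B) \<union> B \<times> B
      then (Ea a B (restr D B) (restr T B) :: 'k) else 0)" for B
  define trm' where "trm' B = (if restr T1 (P - B) = restr U (P - B) \<and> T1 \<subseteq> (P - B) \<times> (P - B) \<union> B \<times> B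
      then (Ea a B (restr U B) (restr T1 B) :: 'k) else 0)" for B
  define BB where "BB = {B. B \<subseteq> A \<and> a \<in> B \<and> B \<noteq> A \<and> upclosed D B}"
  define BB1 where "BB1 = {B. B \<subseteq> P \<and> a \<in> B \<and> upclosed U B}"
  define BB1' where "BB1' = {B. B \<subseteq> P \<and> a \<in> B \<and> B \<noteq> P \<and> upclosed U B}"
  have e0: "Ea a A D T = (if T = D then 1 else 0) - sum trm BB"
    using fin unfolding trm_def BB_def by (subst Ea.simps) simp
  have fin1: "finite P" using fin A by auto
  have e1: "Ea a P U T1 = (if T1 = U then 1 else 0) - sum trm' BB1'"
    using fin1 unfolding trm'_def BB1'_def by (subst Ea.simps) simp
  have up_iff: "upclosed D B \<longleftrightarrow> upclosed U B" if "B \<subseteq> P" for B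
    using that D dj unfolding upclosed_def U_def restr_def by blast
  have BB1_sub: "BB1 \<subseteq> BB"
  proof
    fix B assume "B \<in> BB1"
    then have "B \<subseteq> P" "a \<in> B" "upclosed U B" unfolding BB1_def by auto
    moreover have "B \<noteq> A" using \<open>B \<subseteq> P\<close> A dj ne2 by blast
    ultimately show "B \<in> BB" unfolding BB_def using up_iff A by blast
  qed
  have finBB: "finite BB" unfolding BB_def using fin by (auto intro: finite_subset[of _ "Pow A"])
  have zero: "trm B = 0" if B: "B \<in> BB - BB1" for B
  proof -
    have B1: "B \<subseteq> A" "a \<in> B" "B \<noteq> A" "upclosed D B" using B unfolding BB_def by auto
    have "\<not> B \<subseteq> P" using B up_iff B1 unfolding BB1_def by blast
    then have n2: "B \<inter> Q \<noteq> {}" using B1(1) A by blast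
    have n1: "B \<inter> P \<noteq> {}" using B1(2) a by blast
    have cB: "card B < card A" using B1 fin by (meson psubsetI psubset_card_mono)
    have "(Ea a B (restr D B) (restr T B) :: 'k) = 0"
    proof (rule IH[OF cB])
      show "finite B" using B1(1) fin finite_subset by blast
      show "B = (B \<inter> P) \<union> (B \<inter> Q)" using B1(1) A by blast
      show "(B \<inter> P) \<inter> (B \<inter> Q) = {}" using dj by blast
      show "B \<inter> P \<noteq> {}" by fact
      show "B \<inter> Q \<noteq> {}" by fact
      show "restr D B \<subseteq> (B \<inter> P) \<times> (B \<inter> P) \<union> (B \<inter> Q) \<times> (B \<inter> Q)"
        using D unfolding restr_def by blast
      show "a \<in> B" by fact
    qed
    then show ?thesis unfolding trm_def by simp
  qed
  have s1: "sum trm BB = sum trm BB1"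
    by (rule sum.mono_neutral_right[OF finBB BB1_sub]) (use zero in blast)
  have t: "trm B = (if cond0 then trm' B else 0)" if B: "B \<in> BB1" for B
  proof -
    have BX: "B \<subseteq> P" using B unfolding BB1_def by auto
    have rD: "restr D B = restr U B" unfolding U_def restr_restr using BX by (simp add: Int_absorb1)
    have rT: "restr T B = restr T1 B" unfolding T1_def restr_restr using BX by (simp add: Int_absorb1)
    have kc: "(restr T (A - B) = restr D (A - B) \<and> T \<subseteq> (A - B) \<times> (A - B) \<union> B \<times> B) \<longleftrightarrow>
      cond0 \<and> (restr T1 (P - B) = restr U (P - B) \<and> T1 \<subseteq> (P - B) \<times> (P - B) \<union> B \<times> B)"
      unfolding cond0_def T1_def U_def by (rule kill_cond[OF A dj BX D])
    show ?thesis unfolding trm_def trm'_def rD rT kc by simp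
  qed
  have Pin: "P \<in> BB1" unfolding BB1_def using a by (auto simp: upclosed_def U_def restr_def)
  have BB1_eq: "BB1 = insert P BB1'" unfolding BB1_def BB1'_def using Pin unfolding BB1_def by auto
  have Pnotin: "P \<notin> BB1'" unfolding BB1'_def by auto
  have finBB1': "finite BB1'" unfolding BB1'_def using fin1 by (auto intro: finite_subset[of _ "Pow P"])
  have tP: "trm' P = Ea a P U T1"
  proof -
    have "restr T1 (P - P) = restr U (P - P)" unfolding restr_def by auto
    moreover have "T1 \<subseteq> (P - P) \<times> (P - P) \<union> P \<times> P" unfolding T1_def restr_def by auto
    moreover have "restr U P = U" unfolding U_def restr_restr by simp
    moreover have "restr T1 P = T1" unfolding T1_def restr_restr by simp
    ultimately show ?thesis unfolding trm'_def by simp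
  qed
  have "sum trm' BB1 = (if T1 = U then 1 else 0)"
    unfolding BB1_eq using finBB1' Pnotin tP e1 by simp
  moreover have "sum trm BB1 = (if cond0 then sum trm' BB1 else 0)"
  proof -
    have "sum trm BB1 = sum (\<lambda>B. if cond0 then trm' B else 0) BB1"
      by (rule sum.cong[OF refl]) (rule t)
    also have "\<dots> = (if cond0 then sum trm' BB1 else 0)" by (cases cond0) simp_all
    finally show ?thesis .
  qed
  moreover have "(T = D) \<longleftrightarrow> cond0 \<and> T1 = U"
  proof
    assume "T = D" then show "cond0 \<and> T1 = U" unfolding cond0_def T1_def U_def using D by simp
  next
    assume h: "cond0 \<and> T1 = U"
    then have "T = restr T P \<union> restr T Q" unfolding cond0_def restr_def by blast
    moreover have "D = restr D P \<union> restr D Q" using D unfolding restr_def by blast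
    ultimately show "T = D" using h unfolding cond0_def T1_def U_def by simp
  qed
  ultimately have "sum trm BB = (if T = D then 1 else 0)" using s1 by (cases cond0) auto
  then show ?thesis using e0 by simp
qed

lemma Ea_kill:
  "finite A \<Longrightarrow> A = X1 \<union> X2 \<Longrightarrow> X1 \<inter> X2 = {} \<Longrightarrow> X1 \<noteq> {} \<Longrightarrow> X2 \<noteq> {} \<Longrightarrow>
    D \<subseteq> X1 \<times> X1 \<union> X2 \<times> X2 \<Longrightarrow> a \<in> A \<Longrightarrow> (Ea a A D T :: 'k::field) = 0"
proof (induction "card A" arbitrary: A X1 X2 D T rule: less_induct)
  case less
  have IH: "\<And>A' X1' X2' D' T'. card A' < card A \<Longrightarrow> finite A' \<Longrightarrow> A' = X1' \<union> X2' \<Longrightarrow>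
      X1' \<inter> X2' = {} \<Longrightarrow> X1' \<noteq> {} \<Longrightarrow> X2' \<noteq> {} \<Longrightarrow> D' \<subseteq> X1' \<times> X1' \<union> X2' \<times> X2' \<Longrightarrow> a \<in> A' \<Longrightarrow>
      (Ea a A' D' T' :: 'k) = 0"
    using less.hyps by blast
  show ?case
  proof (cases "a \<in> X1")
    case True
    show ?thesis by (rule Ea_kill_aux[OF IH less.prems(1-6) True])
  next
    case False
    then have a2: "a \<in> X2" using less.prems(2,7) by blast
    show ?thesis
      by (rule Ea_kill_aux[where P=X2 and Q=X1, OF IH less.prems(1)])
         (use less.prems a2 in auto)
  qed
qed


definition Ee :: "nat set \<Rightarrow> nat rel \<Rightarrow> nat rel \<Rightarrow> 'k::field" where
  "Ee A R T = (\<Sum>a\<in>A. Ea a A R T)"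

definition pit :: "nat set \<Rightarrow> nat rel \<Rightarrow> nat \<Rightarrow> 'k::field" where
  "pit X S b = (if b \<in> QBt X then Ee X S (decode b) else 0)"

fun nobw :: "nat rel \<Rightarrow> nat set list \<Rightarrow> bool" where
  "nobw R [] = True"
| "nobw R (X # Xs) = ((\<forall>Y\<in>set Xs. R \<inter> (Y \<times> X) = {}) \<and> nobw R Xs)"

definition phit :: "nat set \<Rightarrow> nat rel \<Rightarrow> word \<Rightarrow> 'k::field" where
  "phit A R w = (if w \<in> cot_basis QBt A \<and> nobw R (map fst w)
     then prod_list (map (\<lambda>(X, b). pit X (restr R X) b) w) else 0)"

subsection \<open>Set compositions\<close>

lemma set_composition_alt:
  "set_composition A Xs \<longleftrightarrow> (\<forall>X\<in>set Xs. finite X \<and> X \<noteq> {}) \<and> distinct Xs \<and>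
     (\<forall>X\<in>set Xs. \<forall>Y\<in>set Xs. X \<noteq> Y \<longrightarrow> X \<inter> Y = {}) \<and> \<Union>(set Xs) = A"
proof
  assume h: "set_composition A Xs"
  have ne: "\<forall>X\<in>set Xs. finite X \<and> X \<noteq> {}" using h unfolding set_composition_def by (elim conjE)
  have dj: "\<forall>i<length Xs. \<forall>j<length Xs. i \<noteq> j \<longrightarrow> Xs ! i \<inter> Xs ! j = {}"
    using h unfolding set_composition_def by (elim conjE)
  have u: "\<Union>(set Xs) = A" using h unfolding set_composition_def by (elim conjE)
  have d: "distinct Xs"
    unfolding distinct_conv_nth
  proof (intro allI impI)
    fix i j assume ij: "i < length Xs" "j < length Xs" "i \<noteq> j"
    have 1: "Xs ! i \<inter> Xs ! j = {}" using dj ij by blast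
    have "Xs ! i \<in> set Xs" using ij(1) by simp
    then have 2: "Xs ! i \<noteq> {}" using ne by blast
    show "Xs ! i \<noteq> Xs ! j" using 1 2 by force
  qed
  have p: "\<forall>X\<in>set Xs. \<forall>Y\<in>set Xs. X \<noteq> Y \<longrightarrow> X \<inter> Y = {}"
  proof (intro ballI impI)
    fix X Y assume XY: "X \<in> set Xs" "Y \<in> set Xs" "X \<noteq> Y"
    obtain i where i: "i < length Xs" "X = Xs ! i" using XY(1) by (metis in_set_conv_nth)
    obtain j where j: "j < length Xs" "Y = Xs ! j" using XY(2) by (metis in_set_conv_nth)
    have "i \<noteq> j" using i j XY(3) by blast
    then show "X \<inter> Y = {}" using dj i j by blast
  qed
  show "(\<forall>X\<in>set Xs. finite X \<and> X \<noteq> {}) \<and> distinct Xs \<and>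
     (\<forall>X\<in>set Xs. \<forall>Y\<in>set Xs. X \<noteq> Y \<longrightarrow> X \<inter> Y = {}) \<and> \<Union>(set Xs) = A"
    using ne d p u by (intro conjI)
next
  assume h: "(\<forall>X\<in>set Xs. finite X \<and> X \<noteq> {}) \<and> distinct Xs \<and>
     (\<forall>X\<in>set Xs. \<forall>Y\<in>set Xs. X \<noteq> Y \<longrightarrow> X \<inter> Y = {}) \<and> \<Union>(set Xs) = A"
  have ne: "\<forall>X\<in>set Xs. finite X \<and> X \<noteq> {}" and d: "distinct Xs"
    and p: "\<forall>X\<in>set Xs. \<forall>Y\<in>set Xs. X \<noteq> Y \<longrightarrow> X \<inter> Y = {}" and u: "\<Union>(set Xs) = A"
    using h by blast+
  have "\<forall>i<length Xs. \<forall>j<length Xs. i \<noteq> j \<longrightarrow> Xs ! i \<inter> Xs ! j = {}"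
  proof (intro allI impI)
    fix i j assume ij: "i < length Xs" "j < length Xs" "i \<noteq> j"
    have neq: "Xs ! i \<noteq> Xs ! j" using nth_eq_iff_index_eq[OF d ij(1) ij(2)] ij(3) by simp
    have "Xs ! i \<in> set Xs" "Xs ! j \<in> set Xs" using ij by simp_all
    then show "Xs ! i \<inter> Xs ! j = {}" using p neq by blast
  qed
  then show "set_composition A Xs" unfolding set_composition_def using ne u by (intro conjI)
qed

lemma set_composition_Nil: "set_composition A [] \<longleftrightarrow> A = {}"
  unfolding set_composition_alt by auto

lemma set_composition_append:
  assumes a: "set_composition A Xs" and b: "set_composition B Ys" and ab: "A \<inter> B = {}"
  shows "set_composition (A \<union> B) (Xs @ Ys)"
proof -
  have neX: "\<forall>X\<in>set Xs. finite X \<and> X \<noteq> {}" and dX: "distinct Xs"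
    and pX: "\<forall>X\<in>set Xs. \<forall>Y\<in>set Xs. X \<noteq> Y \<longrightarrow> X \<inter> Y = {}" and uX: "\<Union>(set Xs) = A"
    using a unfolding set_composition_alt by blast+
  have neY: "\<forall>X\<in>set Ys. finite X \<and> X \<noteq> {}" and dY: "distinct Ys"
    and pY: "\<forall>X\<in>set Ys. \<forall>Y\<in>set Ys. X \<noteq> Y \<longrightarrow> X \<inter> Y = {}" and uY: "\<Union>(set Ys) = B"
    using b unfolding set_composition_alt by blast+
  have cross: "X \<inter> Y = {}" if "X \<in> set Xs" "Y \<in> set Ys" for X Y
  proof -
    have "X \<subseteq> A" "Y \<subseteq> B" using that uX uY by blast+
    then show ?thesis using ab by blast
  qed
  have dis: "set Xs \<inter> set Ys = {}"
  proof (rule ccontr)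
    assume "set Xs \<inter> set Ys \<noteq> {}"
    then obtain X where X: "X \<in> set Xs" "X \<in> set Ys" by blast
    then have "X \<inter> X = {}" using cross by blast
    moreover have "X \<noteq> {}" using X neX by blast
    ultimately show False by simp
  qed
  have ne: "\<forall>X\<in>set (Xs @ Ys). finite X \<and> X \<noteq> {}" unfolding set_append ball_Un using neX neY by blast
  have d: "distinct (Xs @ Ys)" using dX dY dis by simp
  have p: "\<forall>X\<in>set (Xs @ Ys). \<forall>Y\<in>set (Xs @ Ys). X \<noteq> Y \<longrightarrow> X \<inter> Y = {}"
  proof (intro ballI impI)
    fix X Y assume XY: "X \<in> set (Xs @ Ys)" "Y \<in> set (Xs @ Ys)" "X \<noteq> Y"
    then consider "X \<in> set Xs" "Y \<in> set Xs" | "X \<in> set Xs" "Y \<in> set Ys"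
      | "X \<in> set Ys" "Y \<in> set Xs" | "X \<in> set Ys" "Y \<in> set Ys" by auto
    then show "X \<inter> Y = {}"
    proof cases
      case 1 then show ?thesis using pX XY(3) by blast
    next
      case 2 then show ?thesis using cross by blast
    next
      case 3 then show ?thesis using cross by blast
    next
      case 4 then show ?thesis using pY XY(3) by blast
    qed
  qed
  have u: "\<Union>(set (Xs @ Ys)) = A \<union> B" using uX uY by simp
  show ?thesis unfolding set_composition_alt using ne d p u by blast
qed

lemma set_composition_length:
  assumes "set_composition A Xs"
  shows "length Xs \<le> card A"
proof (cases "finite A")
  case True
  have ne: "\<forall>X\<in>set Xs. finite X \<and> X \<noteq> {}" and d: "distinct Xs"
    and dj: "\<forall>X\<in>set Xs. \<forall>Y\<in>set Xs. X \<noteq> Y \<longrightarrow> X \<inter> Y = {}" and u: "\<Union>(set Xs) = A"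
    using assms unfolding set_composition_alt by auto
  have "card A = (\<Sum>X\<in>set Xs. card X)"
    unfolding u[symmetric] using card_UN_disjoint[of "set Xs" id] ne dj by simp
  also have "\<dots> \<ge> (\<Sum>X\<in>set Xs. 1)"
    by (rule sum_mono) (use ne in \<open>auto simp: Suc_le_eq card_gt_0_iff\<close>)
  finally show ?thesis using d by (simp add: distinct_card)
next
  case False
  have "\<forall>X\<in>set Xs. finite X" using assms unfolding set_composition_alt by auto
  then have "finite (\<Union>(set Xs))" by auto
  then show ?thesis using False assms unfolding set_composition_alt by auto
qed

lemma finite_QBt: "finite (QBt X)"
proof (cases "finite X")
  case True
  then show ?thesis unfolding QBt_def using finite_top_basis[OF True]
    by (auto intro: finite_subset)
next
  case False
  then show ?thesis unfolding QBt_def by simp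
qed

lemma cot_basis_sub:
  assumes "w \<in> cot_basis QB A"
  shows "set w \<subseteq> Pow A \<times> (\<Union>X\<in>Pow A. QB X)" "length w \<le> card A"
proof -
  have sc: "set_composition A (map fst w)" and b: "\<forall>(X, b)\<in>set w. b \<in> QB X"
    using assms unfolding cot_basis_def by auto
  have "\<forall>X\<in>set (map fst w). X \<subseteq> A" using sc unfolding set_composition_alt by auto
  then show "set w \<subseteq> Pow A \<times> (\<Union>X\<in>Pow A. QB X)" using b by fastforce
  show "length w \<le> card A" using set_composition_length[OF sc] by simp
qed

lemma finite_cot_basis:
  assumes "finite A"
  shows "finite (cot_basis QBt A)"
proof -
  have "cot_basis QBt A \<subseteq> {w. set w \<subseteq> Pow A \<times> (\<Union>X\<in>Pow A. QBt X) \<and> length w \<le> card A}"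
    using cot_basis_sub by blast
  moreover have "finite {w. set w \<subseteq> Pow A \<times> (\<Union>X\<in>Pow A. QBt X) \<and> length w \<le> card A}"
    by (rule finite_lists_length_le) (use assms finite_QBt in auto)
  ultimately show ?thesis by (rule finite_subset)
qed

lemma cot_basis_empty: "cot_basis QB {} = {[]}"
proof -
  have "w = []" if "w \<in> cot_basis QB {}" for w
  proof (rule ccontr)
    assume "w \<noteq> []"
    then obtain p w' where "w = p # w'" by (cases w) auto
    then have "fst p \<noteq> {}" "fst p \<subseteq> {}" using that unfolding cot_basis_def set_composition_alt by auto
    then show False by auto
  qed
  moreover have "[] \<in> cot_basis QB {}" unfolding cot_basis_def set_composition_alt by auto
  ultimately show ?thesis by auto
qed

lemma cot_basis_append:
  assumes "u \<in> cot_basis QB A" "v \<in> cot_basis QB B" "A \<inter> B = {}"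
  shows "u @ v \<in> cot_basis QB (A \<union> B)"
proof -
  have "set_composition A (map fst u)" "set_composition B (map fst v)"
    using assms(1,2) unfolding cot_basis_def by auto
  then have "set_composition (A \<union> B) (map fst (u @ v))"
    using set_composition_append[OF _ _ assms(3)] by simp
  moreover have "\<forall>(X, b)\<in>set (u @ v). b \<in> QB X"
    using assms(1,2) unfolding cot_basis_def by auto
  ultimately show ?thesis unfolding cot_basis_def by blast
qed

lemma nobw_append:
  "nobw R (Xs @ Ys) \<longleftrightarrow> nobw R Xs \<and> nobw R Ys \<and> (\<forall>X\<in>set Xs. \<forall>Y\<in>set Ys. R \<inter> (Y \<times> X) = {})"
  by (induction Xs) auto

lemma nobw_restr:
  "\<forall>X\<in>set Xs. X \<subseteq> A \<Longrightarrow> nobw (restr R A) Xs \<longleftrightarrow> nobw R Xs"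
proof (induction Xs)
  case (Cons X Xs)
  have "(restr R A) \<inter> (Y \<times> X) = R \<inter> (Y \<times> X)" if "Y \<in> set Xs" for Y
    using Cons.prems that unfolding restr_def by auto
  then show ?case using Cons by auto
qed simp

lemma phit_unit: "(phit {} {} :: word \<Rightarrow> 'k::field) = delta_vec []"
  unfolding phit_def cot_basis_empty delta_vec_def by (rule ext) auto

lemma phit_supp: "supp (phit A R) \<subseteq> cot_basis QBt A"
  unfolding supp_def phit_def by auto

lemma phit_finsupp: "finite A \<Longrightarrow> finsupp_on (cot_basis QBt A) (phit A R)"
  unfolding finsupp_on_def using phit_supp finite_cot_basis finite_subset by blast

subsection \<open>Coproduct\<close>

lemma phit_coprod:
  assumes "A \<inter> B = {}" "R \<in> top_basis (A \<union> B)" "u \<in> cot_basis QBt A" "v \<in> cot_basis QBt B"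
  shows "(phit (A \<union> B) R (u @ v) :: 'k::field) =
     (if upclosed R B then phit A (restr R A) u * phit B (restr R B) v else 0)"
proof -
  have uv: "u @ v \<in> cot_basis QBt (A \<union> B)" using cot_basis_append assms by blast
  have scu: "set_composition A (map fst u)" and scv: "set_composition B (map fst v)"
    using assms(3,4) unfolding cot_basis_def by auto
  have uA: "\<forall>X\<in>set (map fst u). X \<subseteq> A" and UA: "\<Union>(set (map fst u)) = A"
    using scu unfolding set_composition_alt by auto
  have vB: "\<forall>X\<in>set (map fst v). X \<subseteq> B" and UB: "\<Union>(set (map fst v)) = B"
    using scv unfolding set_composition_alt by auto
  have Rsub: "R \<subseteq> (A \<union> B) \<times> (A \<union> B)" using assms(2) top_basis_sub by blast
  have cross: "(\<forall>X\<in>set (map fst u). \<forall>Y\<in>set (map fst v). R \<inter> (Y \<times> X) = {}) \<longleftrightarrow> upclosed R B"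
  proof
    assume h: "\<forall>X\<in>set (map fst u). \<forall>Y\<in>set (map fst v). R \<inter> (Y \<times> X) = {}"
    show "upclosed R B" unfolding upclosed_def
    proof (intro allI impI)
      fix x y assume xy: "(x, y) \<in> R" "x \<in> B"
      show "y \<in> B"
      proof (rule ccontr)
        assume "y \<notin> B"
        then have "y \<in> A" using xy Rsub by blast
        then obtain X where "X \<in> set (map fst u)" "y \<in> X" using UA by blast
        moreover obtain Y where "Y \<in> set (map fst v)" "x \<in> Y" using UB xy by blast
        ultimately show False using h xy by blast
      qed
    qed
  next
    assume h: "upclosed R B"
    show "\<forall>X\<in>set (map fst u). \<forall>Y\<in>set (map fst v). R \<inter> (Y \<times> X) = {}"
    proof (intro ballI)
      fix X Y assume XY: "X \<in> set (map fst u)" "Y \<in> set (map fst v)"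
      then have "X \<subseteq> A" "Y \<subseteq> B" using uA vB by auto
      then show "R \<inter> (Y \<times> X) = {}" using h assms(1) unfolding upclosed_def by blast
    qed
  qed
  have nb: "nobw R (map fst (u @ v)) \<longleftrightarrow>
      nobw (restr R A) (map fst u) \<and> nobw (restr R B) (map fst v) \<and> upclosed R B"
    using nobw_append[of R "map fst u" "map fst v"] nobw_restr[OF uA] nobw_restr[OF vB] cross by auto
  have pu: "map (\<lambda>(X, b). pit X (restr R X) b) u = map (\<lambda>(X, b). (pit X (restr (restr R A) X) b :: 'k)) u"
  proof (rule map_cong[OF refl])
    fix p assume "p \<in> set u"
    then have "fst p \<subseteq> A" using uA by auto
    then show "(case p of (X, b) \<Rightarrow> pit X (restr R X) b) = (case p of (X, b) \<Rightarrow> (pit X (restr (restr R A) X) b :: 'k))"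
      by (cases p) (simp add: restr_restr Int_absorb1)
  qed
  have pv: "map (\<lambda>(X, b). pit X (restr R X) b) v = map (\<lambda>(X, b). (pit X (restr (restr R B) X) b :: 'k)) v"
  proof (rule map_cong[OF refl])
    fix p assume "p \<in> set v"
    then have "fst p \<subseteq> B" using vB by auto
    then show "(case p of (X, b) \<Rightarrow> pit X (restr R X) b) = (case p of (X, b) \<Rightarrow> (pit X (restr (restr R B) X) b :: 'k))"
      by (cases p) (simp add: restr_restr Int_absorb1)
  qed
  have pl: "prod_list (map (\<lambda>(X, b). (pit X (restr R X) b :: 'k)) (u @ v)) =
      prod_list (map (\<lambda>(X, b). pit X (restr (restr R A) X) b) u) *
      prod_list (map (\<lambda>(X, b). pit X (restr (restr R B) X) b) v)"
    by (simp only: map_append prod_list.append pu pv)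
  show ?thesis
    unfolding phit_def using uv assms(3,4) nb pl by auto
qed


lemma map_shuffles: "w \<in> shuffles u v \<Longrightarrow> map f w \<in> shuffles (map f u) (map f v)"
proof (induction u v arbitrary: w rule: shuffles.induct)
  case (3 x xs y ys)
  from "3.prems" obtain w' where "w = x # w' \<and> w' \<in> shuffles xs (y # ys) \<or> w = y # w' \<and> w' \<in> shuffles (x # xs) ys"
    by auto
  then show ?case
  proof
    assume h: "w = x # w' \<and> w' \<in> shuffles xs (y # ys)"
    then have "map f w' \<in> shuffles (map f xs) (map f (y # ys))" using "3.IH"(1) by blast
    then show ?thesis using h by (simp add: Cons_in_shuffles_leftI)
  next
    assume h: "w = y # w' \<and> w' \<in> shuffles (x # xs) ys"
    then have "map f w' \<in> shuffles (map f (x # xs)) (map f ys)" using "3.IH"(2) by blast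
    then show ?thesis using h by (simp add: Cons_in_shuffles_rightI)
  qed
qed auto

lemma prod_list_shuffles:
  fixes g :: "'a \<Rightarrow> 'b::comm_monoid_mult"
  shows "w \<in> shuffles u v \<Longrightarrow> prod_list (map g w) = prod_list (map g u) * prod_list (map g v)"
proof (induction u v arbitrary: w rule: shuffles.induct)
  case (3 x xs y ys)
  from "3.prems" obtain w' where "w = x # w' \<and> w' \<in> shuffles xs (y # ys) \<or> w = y # w' \<and> w' \<in> shuffles (x # xs) ys"
    by auto
  then show ?case
  proof
    assume h: "w = x # w' \<and> w' \<in> shuffles xs (y # ys)"
    then show ?thesis using "3.IH"(1)[of w'] by (simp add: mult.assoc)
  next
    assume h: "w = y # w' \<and> w' \<in> shuffles (x # xs) ys"
    then show ?thesis using "3.IH"(2)[of w'] by (simp add: mult.assoc mult.left_commute)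
  qed
qed auto

lemma nobw_shuffles:
  assumes "A \<inter> B = {}" "R \<subseteq> A \<times> A" "S \<subseteq> B \<times> B"
  shows "w \<in> shuffles u v \<Longrightarrow> \<forall>X\<in>set u. X \<subseteq> A \<Longrightarrow> \<forall>Y\<in>set v. Y \<subseteq> B \<Longrightarrow>
    nobw (R \<union> S) w \<longleftrightarrow> nobw R u \<and> nobw S v"
proof (induction u v arbitrary: w rule: shuffles.induct)
  case (1 ys)
  have rB: "restr (R \<union> S) B = S" using assms unfolding restr_def by blast
  have "nobw (R \<union> S) ys = nobw (restr (R \<union> S) B) ys" using nobw_restr "1.prems"(3) by metis
  then show ?case using "1.prems"(1) rB by simp
next
  case (2 xs)
  have rA: "restr (R \<union> S) A = R" using assms unfolding restr_def by blast
  have "nobw (R \<union> S) xs = nobw (restr (R \<union> S) A) xs" using nobw_restr "2.prems"(2) by metis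
  then show ?case using "2.prems"(1) rA by simp
next
  case (3 x xs y ys)
  from "3.prems"(1) obtain w' where "w = x # w' \<and> w' \<in> shuffles xs (y # ys) \<or> w = y # w' \<and> w' \<in> shuffles (x # xs) ys"
    by auto
  then show ?case
  proof
    assume h: "w = x # w' \<and> w' \<in> shuffles xs (y # ys)"
    have IH: "nobw (R \<union> S) w' \<longleftrightarrow> nobw R xs \<and> nobw S (y # ys)"
      using "3.IH"(1)[of w'] h "3.prems" by auto
    have sw: "set w' = set xs \<union> set (y # ys)" using h set_shuffles by blast
    have xA: "x \<subseteq> A" using "3.prems" by auto
    have "(\<forall>Y\<in>set w'. (R \<union> S) \<inter> (Y \<times> x) = {}) \<longleftrightarrow> (\<forall>Y\<in>set xs. R \<inter> (Y \<times> x) = {})"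
    proof -
      have c1: "(R \<union> S) \<inter> (Y \<times> x) = {}" if "Y \<in> set (y # ys)" for Y
        using that "3.prems"(3) xA assms by blast
      have c2: "(R \<union> S) \<inter> (Y \<times> x) = R \<inter> (Y \<times> x)" if "Y \<in> set xs" for Y
        using xA assms by blast
      show ?thesis
      proof
        assume l: "\<forall>Y\<in>set w'. (R \<union> S) \<inter> (Y \<times> x) = {}"
        show "\<forall>Y\<in>set xs. R \<inter> (Y \<times> x) = {}"
        proof
          fix Y assume "Y \<in> set xs"
          then show "R \<inter> (Y \<times> x) = {}" using l sw c2 by blast
        qed
      next
        assume r: "\<forall>Y\<in>set xs. R \<inter> (Y \<times> x) = {}"
        show "\<forall>Y\<in>set w'. (R \<union> S) \<inter> (Y \<times> x) = {}"
        proof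
          fix Y assume "Y \<in> set w'"
          then have "Y \<in> set xs \<or> Y \<in> set (y # ys)" using sw by blast
          then show "(R \<union> S) \<inter> (Y \<times> x) = {}" using r c1 c2 by metis
        qed
      qed
    qed
    then show ?thesis using h IH by auto
  next
    assume h: "w = y # w' \<and> w' \<in> shuffles (x # xs) ys"
    have IH: "nobw (R \<union> S) w' \<longleftrightarrow> nobw R (x # xs) \<and> nobw S ys"
      using "3.IH"(2)[of w'] h "3.prems" by auto
    have sw: "set w' = set (x # xs) \<union> set ys" using h set_shuffles by blast
    have yB: "y \<subseteq> B" using "3.prems" by auto
    have "(\<forall>Y\<in>set w'. (R \<union> S) \<inter> (Y \<times> y) = {}) \<longleftrightarrow> (\<forall>Y\<in>set ys. S \<inter> (Y \<times> y) = {})"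
    proof -
      have c1: "(R \<union> S) \<inter> (Y \<times> y) = {}" if "Y \<in> set (x # xs)" for Y
        using that "3.prems"(2) yB assms by blast
      have c2: "(R \<union> S) \<inter> (Y \<times> y) = S \<inter> (Y \<times> y)" if "Y \<in> set ys" for Y
        using yB assms by blast
      show ?thesis
      proof
        assume l: "\<forall>Y\<in>set w'. (R \<union> S) \<inter> (Y \<times> y) = {}"
        show "\<forall>Y\<in>set ys. S \<inter> (Y \<times> y) = {}"
        proof
          fix Y assume "Y \<in> set ys"
          then show "S \<inter> (Y \<times> y) = {}" using l sw c2 by blast
        qed
      next
        assume r: "\<forall>Y\<in>set ys. S \<inter> (Y \<times> y) = {}"
        show "\<forall>Y\<in>set w'. (R \<union> S) \<inter> (Y \<times> y) = {}"
        proof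
          fix Y assume "Y \<in> set w'"
          then have "Y \<in> set ys \<or> Y \<in> set (x # xs)" using sw by blast
          then show "(R \<union> S) \<inter> (Y \<times> y) = {}" using r c1 c2 by metis
        qed
      qed
    qed
    then show ?thesis using h IH by auto
  qed
qed

lemma sum_single:
  assumes "finite S" "\<And>x. x \<in> S \<Longrightarrow> x \<noteq> a \<Longrightarrow> g x = 0"
  shows "sum g S = (if a \<in> S then g a else 0)"
proof (cases "a \<in> S")
  case True
  then have "sum g S = g a + sum g (S - {a})" using assms(1) by (simp add: sum.remove)
  also have "sum g (S - {a}) = 0" using assms(2) by (intro sum.neutral) auto
  finally show ?thesis using True by simp
next
  case False
  then show ?thesis using assms by (intro trans[OF sum.neutral]) auto
qed

lemma pit_kill:
  assumes "finite X" "X \<inter> A \<noteq> {}" "X \<inter> B \<noteq> {}" "X \<subseteq> A \<union> B" "A \<inter> B = {}" "R \<subseteq> A \<times> A" "S \<subseteq> B \<times> B"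
  shows "(pit X (restr (R \<union> S) X) b :: 'k::field) = 0"
proof -
  have "(Ea a X (restr (R \<union> S) X) (decode b) :: 'k) = 0" if "a \<in> X" for a
    by (rule Ea_kill[of X "X \<inter> A" "X \<inter> B"]) (use assms that in \<open>auto simp: restr_def\<close>)
  then show ?thesis unfolding pit_def Ee_def by simp
qed

lemma phit_nonzero_split:
  assumes "finite A" "finite B" "A \<inter> B = {}" "R \<in> top_basis A" "S \<in> top_basis B"
    and nz: "(phit (A \<union> B) (R \<union> S) w :: 'k::field) \<noteq> 0"
  shows "filter (\<lambda>p. fst p \<subseteq> A) w \<in> cot_basis QBt A \<and> filter (\<lambda>p. \<not> fst p \<subseteq> A) w \<in> cot_basis QBt B"
proof -
  have w: "w \<in> cot_basis QBt (A \<union> B)" and pr: "prod_list (map (\<lambda>(X, b). (pit X (restr (R \<union> S) X) b :: 'k)) w) \<noteq> 0"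
    using nz unfolding phit_def by (auto split: if_splits)
  have sc: "set_composition (A \<union> B) (map fst w)" and bq: "\<forall>(X, b)\<in>set w. b \<in> QBt X"
    using w unfolding cot_basis_def by auto
  have ne: "\<forall>X\<in>set (map fst w). finite X \<and> X \<noteq> {}" and d: "distinct (map fst w)"
    and dj: "\<forall>X\<in>set (map fst w). \<forall>Y\<in>set (map fst w). X \<noteq> Y \<longrightarrow> X \<inter> Y = {}"
    and un: "\<Union>(set (map fst w)) = A \<union> B"
    using sc unfolding set_composition_alt by auto
  have RA: "R \<subseteq> A \<times> A" "S \<subseteq> B \<times> B" using assms(4,5) top_basis_sub by auto
  have AB: "fst p \<subseteq> A \<or> fst p \<subseteq> B" if "p \<in> set w" for p
  proof (rule ccontr)
    assume "\<not> (fst p \<subseteq> A \<or> fst p \<subseteq> B)"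
    moreover have "fst p \<subseteq> A \<union> B" "finite (fst p)" using that un ne by auto
    ultimately have "(pit (fst p) (restr (R \<union> S) (fst p)) (snd p) :: 'k) = 0"
      using pit_kill[OF _ _ _ _ assms(3) RA] by blast
    then have "(case p of (X, b) \<Rightarrow> (pit X (restr (R \<union> S) X) b :: 'k)) = 0" by (cases p) auto
    then have "prod_list (map (\<lambda>(X, b). (pit X (restr (R \<union> S) X) b :: 'k)) w) = 0"
      using that by (simp add: prod_list_zero_iff)
    then show False using pr by simp
  qed
  have mf1: "map fst (filter (\<lambda>p. fst p \<subseteq> A) w) = filter (\<lambda>X. X \<subseteq> A) (map fst w)"
    by (simp add: filter_map comp_def)
  have mf2: "map fst (filter (\<lambda>p. \<not> fst p \<subseteq> A) w) = filter (\<lambda>X. \<not> X \<subseteq> A) (map fst w)"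
    by (simp add: filter_map comp_def)
  have u1: "\<Union>(set (filter (\<lambda>X. X \<subseteq> A) (map fst w))) = A"
  proof
    show "\<Union>(set (filter (\<lambda>X. X \<subseteq> A) (map fst w))) \<subseteq> A" by auto
  next
    show "A \<subseteq> \<Union>(set (filter (\<lambda>X. X \<subseteq> A) (map fst w)))"
    proof
      fix x assume "x \<in> A"
      then have "x \<in> \<Union>(set (map fst w))" using un by blast
      then obtain X where "X \<in> set (map fst w)" "x \<in> X" by blast
      then obtain p where p: "p \<in> set w" "x \<in> fst p" by auto
      then have "fst p \<subseteq> A" using AB assms(3) \<open>x \<in> A\<close> by blast
      then show "x \<in> \<Union>(set (filter (\<lambda>X. X \<subseteq> A) (map fst w)))" using p by auto
    qed
  qed
  have u2: "\<Union>(set (filter (\<lambda>X. \<not> X \<subseteq> A) (map fst w))) = B"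
  proof
    show "\<Union>(set (filter (\<lambda>X. \<not> X \<subseteq> A) (map fst w))) \<subseteq> B"
    proof
      fix x assume "x \<in> \<Union>(set (filter (\<lambda>X. \<not> X \<subseteq> A) (map fst w)))"
      then obtain p where p: "p \<in> set w" "x \<in> fst p" "\<not> fst p \<subseteq> A" by auto
      then show "x \<in> B" using AB by blast
    qed
  next
    show "B \<subseteq> \<Union>(set (filter (\<lambda>X. \<not> X \<subseteq> A) (map fst w)))"
    proof
      fix x assume "x \<in> B"
      then have "x \<in> \<Union>(set (map fst w))" using un by blast
      then obtain X where "X \<in> set (map fst w)" "x \<in> X" by blast
      then obtain p where p: "p \<in> set w" "x \<in> fst p" by auto
      then have "\<not> fst p \<subseteq> A" using assms(3) \<open>x \<in> B\<close> by blast
      then show "x \<in> \<Union>(set (filter (\<lambda>X. \<not> X \<subseteq> A) (map fst w)))" using p by auto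
    qed
  qed
  have d1: "distinct (map fst (filter (\<lambda>p. fst p \<subseteq> A) w))" unfolding mf1 using d by simp
  have d2: "distinct (map fst (filter (\<lambda>p. \<not> fst p \<subseteq> A) w))" unfolding mf2 using d by simp
  show ?thesis
    unfolding cot_basis_def set_composition_alt mem_Collect_eq mf1 mf2
    using ne d dj u1 u2 bq d1 d2 unfolding mf1 mf2 by auto
qed

lemma shuffles_cot_basis:
  assumes "A \<inter> B = {}" "u \<in> cot_basis QB A" "v \<in> cot_basis QB B" "w \<in> shuffles u v"
  shows "w \<in> cot_basis QB (A \<union> B)"
proof -
  have su: "set_composition A (map fst u)" "\<forall>(X, b)\<in>set u. b \<in> QB X"
    and sv: "set_composition B (map fst v)" "\<forall>(X, b)\<in>set v. b \<in> QB X"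
    using assms unfolding cot_basis_def by auto
  have sw: "set w = set u \<union> set v" using set_shuffles assms(4) by blast
  have ms: "map fst w \<in> shuffles (map fst u) (map fst v)" using map_shuffles assms(4) by blast
  have dj: "set (map fst u) \<inter> set (map fst v) = {}"
  proof (rule ccontr)
    assume "set (map fst u) \<inter> set (map fst v) \<noteq> {}"
    then obtain X where "X \<in> set (map fst u)" "X \<in> set (map fst v)" by blast
    then have "X \<noteq> {}" "X \<subseteq> A" "X \<subseteq> B" using su sv unfolding set_composition_alt by auto
    then show False using assms(1) by blast
  qed
  have d: "distinct (map fst w)"
    by (rule distinct_disjoint_shuffles[OF _ _ dj ms]) (use su sv in \<open>auto simp: set_composition_alt\<close>)
  have smw: "set (map fst w) = set (map fst u) \<union> set (map fst v)" using sw by auto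
  have "set_composition (A \<union> B) (map fst w)"
    unfolding set_composition_alt smw
  proof (intro conjI)
    show "distinct (map fst w)" by (rule d)
    show "\<forall>X\<in>set (map fst u) \<union> set (map fst v). finite X \<and> X \<noteq> {}"
      using su sv unfolding set_composition_alt by auto
    show "\<Union>(set (map fst u) \<union> set (map fst v)) = A \<union> B"
      using su sv unfolding set_composition_alt by auto
    show "\<forall>X\<in>set (map fst u) \<union> set (map fst v). \<forall>Y\<in>set (map fst u) \<union> set (map fst v). X \<noteq> Y \<longrightarrow> X \<inter> Y = {}"
    proof (intro ballI impI)
      fix X Y assume XY: "X \<in> set (map fst u) \<union> set (map fst v)" "Y \<in> set (map fst u) \<union> set (map fst v)" "X \<noteq> Y"
      have sA: "\<forall>Z\<in>set (map fst u). Z \<subseteq> A" and sB: "\<forall>Z\<in>set (map fst v). Z \<subseteq> B"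
        using su sv unfolding set_composition_alt by auto
      have pu: "\<forall>X\<in>set (map fst u). \<forall>Y\<in>set (map fst u). X \<noteq> Y \<longrightarrow> X \<inter> Y = {}"
        using su(1) unfolding set_composition_alt by blast
      have pv: "\<forall>X\<in>set (map fst v). \<forall>Y\<in>set (map fst v). X \<noteq> Y \<longrightarrow> X \<inter> Y = {}"
        using sv(1) unfolding set_composition_alt by blast
      consider "X \<in> set (map fst u)" "Y \<in> set (map fst u)" | "X \<in> set (map fst u)" "Y \<in> set (map fst v)"
        | "X \<in> set (map fst v)" "Y \<in> set (map fst u)" | "X \<in> set (map fst v)" "Y \<in> set (map fst v)"
        using XY(1,2) by blast
      then show "X \<inter> Y = {}"
      proof cases
        case 1 then show ?thesis using pu XY(3) by blast
      next
        case 2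
        then have "X \<subseteq> A" "Y \<subseteq> B" using sA sB by blast+
        then show ?thesis using assms(1) by blast
      next
        case 3
        then have "X \<subseteq> B" "Y \<subseteq> A" using sA sB by blast+
        then show ?thesis using assms(1) by blast
      next
        case 4 then show ?thesis using pv XY(3) by blast
      qed
    qed
  qed
  then show ?thesis unfolding cot_basis_def using sw su sv by auto
qed

lemma phit_prod:
  assumes fA: "finite A" and fB: "finite B" and AB: "A \<inter> B = {}"
    and R: "R \<in> top_basis A" and S: "S \<in> top_basis B"
  shows "(phit (A \<union> B) (R \<union> S) :: word \<Rightarrow> 'k::field) = shuffle_prod (phit A R) (phit B S)"
proof (rule ext)
  fix w :: word
  define P where "P = (\<lambda>p :: nat set \<times> nat. fst p \<subseteq> A)"
  define u0 where "u0 = filter P w"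
  define v0 where "v0 = filter (\<lambda>p. \<not> P p) w"
  have RA: "R \<subseteq> A \<times> A" "S \<subseteq> B \<times> B" using R S top_basis_sub by auto
  have finu: "finite (supp (phit A R :: word \<Rightarrow> 'k))" and finv: "finite (supp (phit B S :: word \<Rightarrow> 'k))"
    using phit_finsupp fA fB unfolding finsupp_on_def by blast+
  have uniq: "u = u0 \<and> v = v0" if "u \<in> cot_basis QBt A" "v \<in> cot_basis QBt B" "w \<in> shuffles u v" for u v
  proof -
    have uA: "\<forall>p\<in>set u. P p" using that(1) unfolding cot_basis_def set_composition_alt P_def by auto
    have vB: "\<forall>p\<in>set v. \<not> P p"
    proof
      fix p assume "p \<in> set v"
      then have "fst p \<subseteq> B" "fst p \<noteq> {}" using that(2) unfolding cot_basis_def set_composition_alt by auto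
      then show "\<not> P p" unfolding P_def using AB by blast
    qed
    have "filter P w \<in> shuffles (filter P u) (filter P v)" using filter_shuffles that(3) by blast
    moreover have "filter P u = u" "filter P v = []" using uA vB by (auto simp: filter_id_conv filter_empty_conv)
    ultimately have 1: "u0 = u" unfolding u0_def by simp
    have "filter (\<lambda>p. \<not> P p) w \<in> shuffles (filter (\<lambda>p. \<not> P p) u) (filter (\<lambda>p. \<not> P p) v)"
      using filter_shuffles that(3) by blast
    moreover have "filter (\<lambda>p. \<not> P p) u = []" "filter (\<lambda>p. \<not> P p) v = v"
      using uA vB by (auto simp: filter_id_conv filter_empty_conv)
    ultimately have 2: "v0 = v" unfolding v0_def by simp
    show ?thesis using 1 2 by simp
  qed
  have rhs: "shuffle_prod (phit A R) (phit B S) w = (phit A R u0 * phit B S v0 :: 'k)"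
  proof -
    have inner: "(\<Sum>v\<in>supp (phit B S :: word \<Rightarrow> 'k). phit A R u * phit B S v * (if w \<in> shuffles u v then 1 else 0))
        = (if u = u0 then phit A R u * phit B S v0 * (if w \<in> shuffles u v0 then 1 else (0 :: 'k)) else 0)"
      if "u \<in> supp (phit A R :: word \<Rightarrow> 'k)" for u
    proof -
      have "(\<Sum>v\<in>supp (phit B S :: word \<Rightarrow> 'k). phit A R u * phit B S v * (if w \<in> shuffles u v then 1 else (0 :: 'k)))
          = (if v0 \<in> supp (phit B S :: word \<Rightarrow> 'k) then phit A R u * phit B S v0 * (if w \<in> shuffles u v0 then 1 else 0) else (0 :: 'k))"
      proof (rule sum_single[OF finv, where a=v0])
        fix v
        assume v: "v \<in> supp (phit B S :: word \<Rightarrow> 'k)" "v \<noteq> v0"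
        have "u \<in> cot_basis QBt A" using that phit_supp by blast
        moreover have "v \<in> cot_basis QBt B" using v phit_supp by blast
        ultimately have "w \<notin> shuffles u v" using uniq v(2) by blast
        then show "phit A R u * phit B S v * (if w \<in> shuffles u v then 1 else 0) = (0 :: 'k)"
          by simp
      qed
      also have "\<dots> = (if u = u0 then phit A R u * phit B S v0 * (if w \<in> shuffles u v0 then 1 else 0) else 0)"
      proof (cases "v0 \<in> supp (phit B S :: word \<Rightarrow> 'k) \<and> u = u0")
        case False
        show ?thesis
        proof (cases "v0 \<in> supp (phit B S :: word \<Rightarrow> 'k)")
          case True
          then have "u \<noteq> u0" using False by auto
          moreover have "w \<notin> shuffles u v0"
          proof -
            have "u \<in> cot_basis QBt A" using that phit_supp by blast
            moreover have "v0 \<in> cot_basis QBt B" using True phit_supp by blast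
            ultimately show ?thesis using uniq \<open>u \<noteq> u0\<close> by blast
          qed
          ultimately show ?thesis by simp
        next
          case False
          then have "(phit B S v0 :: 'k) = 0" unfolding supp_def by auto
          then show ?thesis by simp
        qed
      qed auto
      finally show ?thesis .
    qed
    have "(shuffle_prod (phit A R) (phit B S) w :: 'k) =
        (\<Sum>u\<in>supp (phit A R :: word \<Rightarrow> 'k). if u = u0 then phit A R u * phit B S v0 * (if w \<in> shuffles u v0 then 1 else 0) else 0)"
      unfolding shuffle_prod_def by (rule sum.cong[OF refl]) (rule inner)
    also have "\<dots> = (if u0 \<in> supp (phit A R :: word \<Rightarrow> 'k) then phit A R u0 * phit B S v0 * (if w \<in> shuffles u0 v0 then 1 else 0) else 0)"
      by (subst sum_single[OF finu, where a=u0]) auto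
    also have "\<dots> = phit A R u0 * phit B S v0"
      using partition_in_shuffles[of w P] unfolding u0_def v0_def supp_def by auto
    finally show ?thesis .
  qed
  show "(phit (A \<union> B) (R \<union> S) w :: 'k) = shuffle_prod (phit A R) (phit B S) w"
  proof (cases "u0 \<in> cot_basis QBt A \<and> v0 \<in> cot_basis QBt B")
    case False
    then have "(phit (A \<union> B) (R \<union> S) w :: 'k) = 0"
      using phit_nonzero_split[OF fA fB AB R S, of w] unfolding u0_def v0_def P_def by blast
    moreover have "(phit A R u0 * phit B S v0 :: 'k) = 0"
      using False unfolding phit_def by auto
    ultimately show ?thesis using rhs by simp
  next
    case True
    have sh: "w \<in> shuffles u0 v0" using partition_in_shuffles[of w P] unfolding u0_def v0_def .
    have wb: "w \<in> cot_basis QBt (A \<union> B)" using shuffles_cot_basis[OF AB _ _ sh] True by blast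
    have uA: "\<forall>X\<in>set (map fst u0). X \<subseteq> A" using True unfolding cot_basis_def set_composition_alt by auto
    have vB: "\<forall>X\<in>set (map fst v0). X \<subseteq> B" using True unfolding cot_basis_def set_composition_alt by auto
    have nb: "nobw (R \<union> S) (map fst w) \<longleftrightarrow> nobw R (map fst u0) \<and> nobw S (map fst v0)"
      using nobw_shuffles[OF AB RA map_shuffles[OF sh] uA vB] .
    define g where "g = (\<lambda>(X, b). (pit X (restr (R \<union> S) X) b :: 'k))"
    have pl: "prod_list (map g w) = prod_list (map g u0) * prod_list (map g v0)"
      using prod_list_shuffles[OF sh] .
    have gu: "map g u0 = map (\<lambda>(X, b). pit X (restr R X) b) u0"
    proof (rule map_cong[OF refl])
      fix p assume "p \<in> set u0"
      then have "fst p \<subseteq> A" using uA by auto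
      then have "restr (R \<union> S) (fst p) = restr R (fst p)" using RA AB unfolding restr_def by blast
      then show "g p = (case p of (X, b) \<Rightarrow> pit X (restr R X) b)" unfolding g_def by (cases p) auto
    qed
    have gv: "map g v0 = map (\<lambda>(X, b). pit X (restr S X) b) v0"
    proof (rule map_cong[OF refl])
      fix p assume "p \<in> set v0"
      then have "fst p \<subseteq> B" using vB by auto
      then have "restr (R \<union> S) (fst p) = restr S (fst p)" using RA AB unfolding restr_def by blast
      then show "g p = (case p of (X, b) \<Rightarrow> pit X (restr S X) b)" unfolding g_def by (cases p) auto
    qed
    have "phit (A \<union> B) (R \<union> S) w = (phit A R u0 * phit B S v0 :: 'k)"
      unfolding phit_def using wb True nb pl gu gv unfolding g_def by auto
    then show ?thesis using rhs by simp
  qed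
qed


subsection \<open>Naturality of Ea\<close>

lemma top_act_sub_iff:
  assumes inj: "inj_on \<sigma> X" and T: "T \<subseteq> X \<times> X" and P: "P \<subseteq> X" and Q: "Q \<subseteq> X"
  shows "top_act \<sigma> T \<subseteq> (\<sigma> ` P) \<times> (\<sigma> ` P) \<union> (\<sigma> ` Q) \<times> (\<sigma> ` Q) \<longleftrightarrow> T \<subseteq> P \<times> P \<union> Q \<times> Q"
proof
  assume h: "top_act \<sigma> T \<subseteq> (\<sigma> ` P) \<times> (\<sigma> ` P) \<union> (\<sigma> ` Q) \<times> (\<sigma> ` Q)"
  show "T \<subseteq> P \<times> P \<union> Q \<times> Q"
  proof
    fix p assume p: "p \<in> T"
    obtain x y where xy: "p = (x, y)" by (cases p)
    have xX: "x \<in> X" "y \<in> X" using p xy T by auto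
    have "(\<sigma> x, \<sigma> y) \<in> top_act \<sigma> T" using p xy unfolding top_act_def by force
    then have "(\<sigma> x \<in> \<sigma> ` P \<and> \<sigma> y \<in> \<sigma> ` P) \<or> (\<sigma> x \<in> \<sigma> ` Q \<and> \<sigma> y \<in> \<sigma> ` Q)" using h by blast
    moreover have "\<sigma> x \<in> \<sigma> ` P \<longleftrightarrow> x \<in> P" "\<sigma> y \<in> \<sigma> ` P \<longleftrightarrow> y \<in> P"
      "\<sigma> x \<in> \<sigma> ` Q \<longleftrightarrow> x \<in> Q" "\<sigma> y \<in> \<sigma> ` Q \<longleftrightarrow> y \<in> Q"
      using inj xX P Q by (auto simp: inj_on_image_mem_iff)
    ultimately show "p \<in> P \<times> P \<union> Q \<times> Q" using xy by auto
  qed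
next
  assume h: "T \<subseteq> P \<times> P \<union> Q \<times> Q"
  show "top_act \<sigma> T \<subseteq> (\<sigma> ` P) \<times> (\<sigma> ` P) \<union> (\<sigma> ` Q) \<times> (\<sigma> ` Q)"
  proof
    fix p assume "p \<in> top_act \<sigma> T"
    then obtain x y where "p = (\<sigma> x, \<sigma> y)" "(x, y) \<in> T" by (rule top_act_memE)
    then show "p \<in> (\<sigma> ` P) \<times> (\<sigma> ` P) \<union> (\<sigma> ` Q) \<times> (\<sigma> ` Q)" using h by blast
  qed
qed

lemma Ea_nat:
  fixes a :: nat and X :: "nat set"
  shows "finite X \<Longrightarrow> inj_on \<sigma> X \<Longrightarrow> a \<in> X \<Longrightarrow> S \<subseteq> X \<times> X \<Longrightarrow> T \<subseteq> X \<times> X \<Longrightarrow>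
    (Ea (\<sigma> a) (\<sigma> ` X) (top_act \<sigma> S) (top_act \<sigma> T) :: 'k::field) = Ea a X S T"
proof (induction "card X" arbitrary: X S T rule: less_induct)
  case less
  note fin = less.prems(1) and inj = less.prems(2) and aX = less.prems(3)
    and SX = less.prems(4) and TX = less.prems(5)
  define BB where "BB = {B. B \<subseteq> X \<and> a \<in> B \<and> B \<noteq> X \<and> upclosed S B}"
  define BB' where "BB' = {B. B \<subseteq> \<sigma> ` X \<and> \<sigma> a \<in> B \<and> B \<noteq> \<sigma> ` X \<and> upclosed (top_act \<sigma> S) B}"
  define trm where "trm B = (if restr T (X - B) = restr S (X - B) \<and> T \<subseteq> (X - B) \<times> (X - B) \<union> B \<times> B
        then (Ea a B (restr S B) (restr T B) :: 'k) else 0)" for B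
  define trm' where "trm' B = (if restr (top_act \<sigma> T) (\<sigma> ` X - B) = restr (top_act \<sigma> S) (\<sigma> ` X - B) \<and>
        top_act \<sigma> T \<subseteq> (\<sigma> ` X - B) \<times> (\<sigma> ` X - B) \<union> B \<times> B
        then (Ea (\<sigma> a) B (restr (top_act \<sigma> S) B) (restr (top_act \<sigma> T) B) :: 'k) else 0)" for B
  have finX': "finite (\<sigma> ` X)" using fin by simp
  have e1: "Ea a X S T = (if T = S then 1 else 0) - sum trm BB"
    using fin unfolding trm_def BB_def by (subst Ea.simps) simp
  have e2: "Ea (\<sigma> a) (\<sigma> ` X) (top_act \<sigma> S) (top_act \<sigma> T) =
      (if top_act \<sigma> T = top_act \<sigma> S then 1 else 0) - sum trm' BB'"
    using finX' unfolding trm'_def BB'_def by (subst Ea.simps) simp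
  have eqTS: "top_act \<sigma> T = top_act \<sigma> S \<longleftrightarrow> T = S" using top_act_inj[OF inj TX SX] by auto
  have BB'_eq: "BB' = (\<lambda>B. \<sigma> ` B) ` BB"
  proof
    show "(\<lambda>B. \<sigma> ` B) ` BB \<subseteq> BB'"
    proof
      fix B' assume "B' \<in> (\<lambda>B. \<sigma> ` B) ` BB"
      then obtain B where B: "B' = \<sigma> ` B" "B \<subseteq> X" "a \<in> B" "B \<noteq> X" "upclosed S B" unfolding BB_def by auto
      have "\<sigma> ` B \<noteq> \<sigma> ` X" using B inj by (metis inj_on_image_eq_iff order_refl)
      moreover have "upclosed (top_act \<sigma> S) (\<sigma> ` B)" using top_act_upclosed[OF inj SX B(2)] B by simp
      ultimately show "B' \<in> BB'" unfolding BB'_def using B by auto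
    qed
  next
    show "BB' \<subseteq> (\<lambda>B. \<sigma> ` B) ` BB"
    proof
      fix B' assume "B' \<in> BB'"
      then have B': "B' \<subseteq> \<sigma> ` X" "\<sigma> a \<in> B'" "B' \<noteq> \<sigma> ` X" "upclosed (top_act \<sigma> S) B'" unfolding BB'_def by auto
      define B where "B = X \<inter> \<sigma> -` B'"
      have BB': "\<sigma> ` B = B'" unfolding B_def using B'(1) by auto
      have "B \<subseteq> X" unfolding B_def by auto
      moreover have "a \<in> B" unfolding B_def using aX B'(2) by auto
      moreover have "B \<noteq> X" using BB' B'(3) by auto
      moreover have "upclosed S B" using top_act_upclosed[OF inj SX \<open>B \<subseteq> X\<close>] BB' B'(4) by simp
      ultimately show "B' \<in> (\<lambda>B. \<sigma> ` B) ` BB" unfolding BB_def using BB' by blast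
    qed
  qed
  have injI: "inj_on (\<lambda>B. \<sigma> ` B) BB"
    by (rule inj_on_subset[OF inj_on_image_Pow[OF inj]]) (auto simp: BB_def)
  have tt: "trm' (\<sigma> ` B) = trm B" if B: "B \<in> BB" for B
  proof -
    have BX: "B \<subseteq> X" "a \<in> B" "B \<noteq> X" using B unfolding BB_def by auto
    have cB: "card B < card X" using BX fin by (meson psubsetI psubset_card_mono)
    have finB: "finite B" using BX fin finite_subset by blast
    have injB: "inj_on \<sigma> B" using inj BX inj_on_subset by blast
    have XB: "X - B \<subseteq> X" by auto
    have dif: "\<sigma> ` X - \<sigma> ` B = \<sigma> ` (X - B)" using inj BX by (simp add: inj_on_image_set_diff)
    have r1: "restr (top_act \<sigma> T) (\<sigma> ` (X - B)) = top_act \<sigma> (restr T (X - B))"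
      by (rule top_act_restr[OF inj TX XB])
    have r2: "restr (top_act \<sigma> S) (\<sigma> ` (X - B)) = top_act \<sigma> (restr S (X - B))"
      by (rule top_act_restr[OF inj SX XB])
    have c1: "restr (top_act \<sigma> T) (\<sigma> ` X - \<sigma> ` B) = restr (top_act \<sigma> S) (\<sigma> ` X - \<sigma> ` B) \<longleftrightarrow>
        restr T (X - B) = restr S (X - B)"
      unfolding dif r1 r2 using top_act_inj[OF inj, of "restr T (X - B)" "restr S (X - B)"]
      by (auto simp: restr_def)
    have c2: "top_act \<sigma> T \<subseteq> (\<sigma> ` X - \<sigma> ` B) \<times> (\<sigma> ` X - \<sigma> ` B) \<union> \<sigma> ` B \<times> \<sigma> ` B \<longleftrightarrow>
        T \<subseteq> (X - B) \<times> (X - B) \<union> B \<times> B"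
      unfolding dif by (rule top_act_sub_iff[OF inj TX XB BX(1)])
    have r3: "restr (top_act \<sigma> S) (\<sigma> ` B) = top_act \<sigma> (restr S B)" by (rule top_act_restr[OF inj SX BX(1)])
    have r4: "restr (top_act \<sigma> T) (\<sigma> ` B) = top_act \<sigma> (restr T B)" by (rule top_act_restr[OF inj TX BX(1)])
    have ih: "(Ea (\<sigma> a) (\<sigma> ` B) (top_act \<sigma> (restr S B)) (top_act \<sigma> (restr T B)) :: 'k) = Ea a B (restr S B) (restr T B)"
      using less.hyps[OF cB finB injB BX(2) restr_sub restr_sub] by simp
    show ?thesis unfolding trm_def trm'_def c1 c2 r3 r4 ih by simp
  qed
  have "sum trm' BB' = sum trm BB"
    unfolding BB'_eq by (simp add: sum.reindex[OF injI] tt)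
  then show ?case using e1 e2 eqTS by simp
qed

lemma Ee_nat:
  assumes "finite X" "inj_on \<sigma> X" "S \<subseteq> X \<times> X" "T \<subseteq> X \<times> X"
  shows "(Ee (\<sigma> ` X) (top_act \<sigma> S) (top_act \<sigma> T) :: 'k::field) = Ee X S T"
proof -
  have "(Ee (\<sigma> ` X) (top_act \<sigma> S) (top_act \<sigma> T) :: 'k) = (\<Sum>a\<in>X. Ea (\<sigma> a) (\<sigma> ` X) (top_act \<sigma> S) (top_act \<sigma> T))"
    unfolding Ee_def by (simp add: sum.reindex[OF assms(2)])
  also have "\<dots> = (\<Sum>a\<in>X. Ea a X S T)"
    by (rule sum.cong[OF refl]) (rule Ea_nat[OF assms(1,2) _ assms(3,4)])
  finally show ?thesis unfolding Ee_def .
qed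


definition actw :: "(nat \<Rightarrow> nat) \<Rightarrow> word \<Rightarrow> word" where
  "actw \<sigma> w = map (\<lambda>(X, b). (\<sigma> ` X, code (top_act \<sigma> (decode b)))) w"

lemma finite_top_act: "finite T \<Longrightarrow> finite (top_act \<sigma> T)"
  unfolding top_act_def by simp

lemma cot_basis_blocks:
  assumes "w \<in> cot_basis QBt A" "p \<in> set w"
  shows "fst p \<subseteq> A" "snd p \<in> QBt (fst p)" "finite (fst p)" "fst p \<noteq> {}"
proof -
  have sc: "set_composition A (map fst w)" and b: "\<forall>(X, b)\<in>set w. b \<in> QB X" if "QB = QBt" for QB
    using assms that unfolding cot_basis_def by auto
  have "fst p \<in> set (map fst w)" using assms(2) by auto
  then show "fst p \<subseteq> A" "finite (fst p)" "fst p \<noteq> {}" using sc[OF refl] unfolding set_composition_alt by auto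
  show "snd p \<in> QBt (fst p)" using b[OF refl] assms(2) by (cases p) auto
qed

lemma actw_cot_basis:
  assumes bij: "bij_betw \<sigma> A A'" and w: "w \<in> cot_basis QBt A"
  shows "actw \<sigma> w \<in> cot_basis QBt A'"
proof -
  have inj: "inj_on \<sigma> A" and img: "\<sigma> ` A = A'" using bij bij_betw_imp_inj_on bij_betw_imp_surj_on by blast+
  have sc: "set_composition A (map fst w)" using w unfolding cot_basis_def by auto
  have ne: "\<forall>X\<in>set (map fst w). finite X \<and> X \<noteq> {}" and d: "distinct (map fst w)"
    and p: "\<forall>X\<in>set (map fst w). \<forall>Y\<in>set (map fst w). X \<noteq> Y \<longrightarrow> X \<inter> Y = {}"
    and u: "\<Union>(set (map fst w)) = A" using sc unfolding set_composition_alt by blast+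
  have sub: "\<forall>X\<in>set (map fst w). X \<subseteq> A" using u by blast
  have mf: "map fst (actw \<sigma> w) = map (\<lambda>X. \<sigma> ` X) (map fst w)"
    unfolding actw_def by (induction w) auto
  have injP: "inj_on (\<lambda>X. \<sigma> ` X) (set (map fst w))"
    by (rule inj_on_subset[OF inj_on_image_Pow[OF inj]]) (use sub in auto)
  have "set_composition A' (map (\<lambda>X. \<sigma> ` X) (map fst w))"
    unfolding set_composition_alt
  proof (intro conjI)
    show "\<forall>X\<in>set (map (\<lambda>X. \<sigma> ` X) (map fst w)). finite X \<and> X \<noteq> {}" using ne by auto
    show "distinct (map (\<lambda>X. \<sigma> ` X) (map fst w))"
      unfolding distinct_map[of "\<lambda>X. \<sigma> ` X" "map fst w"] using d injP by blast
    show "\<forall>X\<in>set (map (\<lambda>X. \<sigma> ` X) (map fst w)). \<forall>Y\<in>set (map (\<lambda>X. \<sigma> ` X) (map fst w)). X \<noteq> Y \<longrightarrow> X \<inter> Y = {}"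
    proof (intro ballI impI)
      fix X' Y' assume h: "X' \<in> set (map (\<lambda>X. \<sigma> ` X) (map fst w))" "Y' \<in> set (map (\<lambda>X. \<sigma> ` X) (map fst w))" "X' \<noteq> Y'"
      then obtain X Y where XY: "X \<in> set (map fst w)" "Y \<in> set (map fst w)" "X' = \<sigma> ` X" "Y' = \<sigma> ` Y"
        by auto
      then have "X \<noteq> Y" using h(3) by auto
      then have "X \<inter> Y = {}" using p XY by blast
      moreover have "\<sigma> ` (X \<inter> Y) = \<sigma> ` X \<inter> \<sigma> ` Y"
        using inj XY sub by (intro inj_on_image_Int) auto
      ultimately show "X' \<inter> Y' = {}" using XY by simp
    qed
    show "\<Union>(set (map (\<lambda>X. \<sigma> ` X) (map fst w))) = A'" using u img by auto
  qed
  moreover have "\<forall>(X, b)\<in>set (actw \<sigma> w). b \<in> QBt X"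
  proof
    fix q assume "q \<in> set (actw \<sigma> w)"
    then obtain p where p: "p \<in> set w" "q = (\<sigma> ` fst p, code (top_act \<sigma> (decode (snd p))))"
      unfolding actw_def by (auto simp: case_prod_beta)
    have "fst p \<subseteq> A" "snd p \<in> QBt (fst p)" using cot_basis_blocks[OF w p(1)] by auto
    then have "bij_betw \<sigma> (fst p) (\<sigma> ` fst p)" using inj inj_on_subset by (blast intro: inj_on_imp_bij_betw)
    then have "code (top_act \<sigma> (decode (snd p))) \<in> QBt (\<sigma> ` fst p)"
      using QBt_act \<open>snd p \<in> QBt (fst p)\<close> by blast
    then show "case q of (X, b) \<Rightarrow> b \<in> QBt X" using p by simp
  qed
  ultimately show ?thesis unfolding cot_basis_def mem_Collect_eq mf by blast
qed

lemma actw_cancel: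
  assumes inj: "inj_on \<sigma> A" and inv: "\<forall>x\<in>A. \<tau> (\<sigma> x) = x" and w: "w \<in> cot_basis QBt A"
  shows "actw \<tau> (actw \<sigma> w) = w"
proof -
  have "actw \<tau> (actw \<sigma> w) = map (\<lambda>p. p) w"
    unfolding actw_def map_map
  proof (rule map_cong[OF refl])
    fix p assume p: "p \<in> set w"
    obtain X b where Xb: "p = (X, b)" by (cases p)
    have XA: "X \<subseteq> A" and bq: "b \<in> QBt X" using cot_basis_blocks[OF w p] Xb by auto
    have T: "decode b \<in> top_basis X" "code (decode b) = b" using QBtD[OF bq] by auto
    have TX: "decode b \<subseteq> A \<times> A" using top_basis_sub[OF T(1)] XA by blast
    have fT: "finite (decode b)" using top_basis_finite_rel[OF QBtD(1)[OF bq] T(1)] .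
    have "decode (code (top_act \<sigma> (decode b))) = top_act \<sigma> (decode b)"
      using decode_code finite_top_act[OF fT] by blast
    moreover have "top_act \<tau> (top_act \<sigma> (decode b)) = decode b"
    proof -
      have "top_act \<tau> (top_act \<sigma> (decode b)) = top_act (\<tau> \<circ> \<sigma>) (decode b)" by (simp add: top_act_comp)
      also have "\<dots> = top_act id (decode b)" using inv TX by (intro top_act_cong[of A]) auto
      finally show ?thesis by (simp add: top_act_id)
    qed
    moreover have "\<tau> ` \<sigma> ` X = X" using inv XA by (force simp: image_image)
    ultimately show "((\<lambda>(X, b). (\<tau> ` X, code (top_act \<tau> (decode b)))) \<circ> (\<lambda>(X, b). (\<sigma> ` X, code (top_act \<sigma> (decode b))))) p = p"
      using Xb T(2) by simp
  qed
  then show ?thesis by simp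
qed

lemma nobw_act:
  assumes inj: "inj_on \<sigma> A" and R: "R \<subseteq> A \<times> A"
  shows "\<forall>X\<in>set Xs. X \<subseteq> A \<Longrightarrow> nobw (top_act \<sigma> R) (map (\<lambda>X. \<sigma> ` X) Xs) \<longleftrightarrow> nobw R Xs"
proof (induction Xs)
  case (Cons X Xs)
  have "top_act \<sigma> R \<inter> (\<sigma> ` Y \<times> \<sigma> ` X) = {} \<longleftrightarrow> R \<inter> (Y \<times> X) = {}" if "Y \<in> set Xs" for Y
  proof
    assume h: "top_act \<sigma> R \<inter> (\<sigma> ` Y \<times> \<sigma> ` X) = {}"
    show "R \<inter> (Y \<times> X) = {}"
    proof (rule ccontr)
      assume "R \<inter> (Y \<times> X) \<noteq> {}"
      then obtain y x where "(y, x) \<in> R" "y \<in> Y" "x \<in> X" by auto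
      then have "(\<sigma> y, \<sigma> x) \<in> top_act \<sigma> R \<inter> (\<sigma> ` Y \<times> \<sigma> ` X)" unfolding top_act_def by force
      then show False using h by blast
    qed
  next
    assume h: "R \<inter> (Y \<times> X) = {}"
    show "top_act \<sigma> R \<inter> (\<sigma> ` Y \<times> \<sigma> ` X) = {}"
    proof (rule ccontr)
      assume "top_act \<sigma> R \<inter> (\<sigma> ` Y \<times> \<sigma> ` X) \<noteq> {}"
      then obtain p where p: "p \<in> top_act \<sigma> R" "p \<in> \<sigma> ` Y \<times> \<sigma> ` X" by blast
      from p(1) obtain y x where yx: "p = (\<sigma> y, \<sigma> x)" "(y, x) \<in> R" by (rule top_act_memE)
      have "y \<in> A" "x \<in> A" using yx R by auto
      moreover have "Y \<subseteq> A" "X \<subseteq> A" using Cons.prems that by auto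
      ultimately have "y \<in> Y" "x \<in> X" using p yx inj by (auto simp: inj_on_image_mem_iff)
      then show False using h yx by blast
    qed
  qed
  then show ?case using Cons by auto
qed simp

lemma phit_act:
  assumes bij: "bij_betw \<sigma> A A'" and R: "R \<in> top_basis A" and w: "w \<in> cot_basis QBt A"
  shows "(phit A' (top_act \<sigma> R) (actw \<sigma> w) :: 'k::field) = phit A R w"
proof -
  have inj: "inj_on \<sigma> A" using bij bij_betw_imp_inj_on by blast
  have RA: "R \<subseteq> A \<times> A" using R top_basis_sub by blast
  have w': "actw \<sigma> w \<in> cot_basis QBt A'" using actw_cot_basis[OF bij w] .
  have mf: "map fst (actw \<sigma> w) = map (\<lambda>X. \<sigma> ` X) (map fst w)"
    unfolding actw_def by (induction w) auto
  have sub: "\<forall>X\<in>set (map fst w). X \<subseteq> A" using cot_basis_blocks[OF w] by auto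
  have nb: "nobw (top_act \<sigma> R) (map fst (actw \<sigma> w)) \<longleftrightarrow> nobw R (map fst w)"
    unfolding mf using nobw_act[OF inj RA sub] .
  have pr: "map (\<lambda>(X, b). (pit X (restr (top_act \<sigma> R) X) b :: 'k)) (actw \<sigma> w) =
      map (\<lambda>(X, b). pit X (restr R X) b) w"
    unfolding actw_def map_map
  proof (rule map_cong[OF refl])
    fix p assume p: "p \<in> set w"
    obtain X b where Xb: "p = (X, b)" by (cases p)
    have XA: "X \<subseteq> A" and bq: "b \<in> QBt X" and fX: "finite X" using cot_basis_blocks[OF w p] Xb by auto
    have injX: "inj_on \<sigma> X" using inj XA inj_on_subset by blast
    have bijX: "bij_betw \<sigma> X (\<sigma> ` X)" using injX by (rule inj_on_imp_bij_betw)
    have b': "code (top_act \<sigma> (decode b)) \<in> QBt (\<sigma> ` X)"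
      and db: "decode (code (top_act \<sigma> (decode b))) = top_act \<sigma> (decode b)"
      using QBt_act[OF bijX bq] by auto
    have TX: "decode b \<subseteq> X \<times> X" using QBtD(2)[OF bq] top_basis_sub by blast
    have rr: "restr (top_act \<sigma> R) (\<sigma> ` X) = top_act \<sigma> (restr R X)" by (rule top_act_restr[OF inj RA XA])
    have "(pit (\<sigma> ` X) (restr (top_act \<sigma> R) (\<sigma> ` X)) (code (top_act \<sigma> (decode b))) :: 'k) =
        Ee (\<sigma> ` X) (top_act \<sigma> (restr R X)) (top_act \<sigma> (decode b))"
      unfolding pit_def using b' db rr by simp
    also have "\<dots> = Ee X (restr R X) (decode b)"
      by (rule Ee_nat[OF fX injX restr_sub TX])
    also have "\<dots> = pit X (restr R X) b" unfolding pit_def using bq by simp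
    finally show "((\<lambda>(X, b). (pit X (restr (top_act \<sigma> R) X) b :: 'k)) \<circ> (\<lambda>(X, b). (\<sigma> ` X, code (top_act \<sigma> (decode b))))) p =
        (case p of (X, b) \<Rightarrow> pit X (restr R X) b)" using Xb by simp
  qed
  show ?thesis unfolding phit_def using w w' nb pr by simp
qed

lemma cot_act_basis:
  assumes bij: "bij_betw \<sigma> A A'" and w: "w \<in> cot_basis QBt A"
  shows "(cot_act Qactt \<sigma> w w' :: 'k::comm_ring_1) = (if w' = actw \<sigma> w then 1 else 0)"
proof -
  have mf: "map (\<lambda>p. \<sigma> ` fst p) w = map fst (actw \<sigma> w)" unfolding actw_def by (induction w) auto
  have Q: "(Qactt \<sigma> (fst (w ! i)) (snd (w ! i)) (snd (w' ! i)) :: 'k) =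
      (if snd (w' ! i) = snd (actw \<sigma> w ! i) then 1 else 0)" if "i < length w" for i
  proof -
    have "w ! i \<in> set w" using that by simp
    then have "snd (w ! i) \<in> QBt (fst (w ! i))" using cot_basis_blocks[OF w] by blast
    moreover have "snd (actw \<sigma> w ! i) = code (top_act \<sigma> (decode (snd (w ! i))))"
      unfolding actw_def using that by (simp add: case_prod_beta)
    ultimately show ?thesis unfolding Qactt_def delta_vec_def by auto
  qed
  show ?thesis
  proof (cases "map fst w' = map fst (actw \<sigma> w)")
    case False
    then have "w' \<noteq> actw \<sigma> w" by auto
    then show ?thesis unfolding cot_act_def mf using False by simp
  next
    case True
    have len: "length w' = length w" using True by (metis length_map actw_def)
    have "(\<Prod>i<length w. (Qactt \<sigma> (fst (w ! i)) (snd (w ! i)) (snd (w' ! i)) :: 'k)) =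
        (\<Prod>i<length w. if snd (w' ! i) = snd (actw \<sigma> w ! i) then 1 else 0)"
      by (rule prod.cong[OF refl]) (use Q in simp)
    also have "\<dots> = (if \<forall>i<length w. snd (w' ! i) = snd (actw \<sigma> w ! i) then 1 else 0)"
    proof (cases "\<forall>i<length w. snd (w' ! i) = snd (actw \<sigma> w ! i)")
      case True then show ?thesis by simp
    next
      case False
      then obtain i where "i < length w" "snd (w' ! i) \<noteq> snd (actw \<sigma> w ! i)" by blast
      then show ?thesis using False by (intro trans[OF prod_zero]) auto
    qed
    also have "(\<forall>i<length w. snd (w' ! i) = snd (actw \<sigma> w ! i)) \<longleftrightarrow> w' = actw \<sigma> w"
    proof
      assume h: "\<forall>i<length w. snd (w' ! i) = snd (actw \<sigma> w ! i)"
      have la: "length (actw \<sigma> w) = length w" unfolding actw_def by simp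
      show "w' = actw \<sigma> w"
      proof (rule nth_equalityI)
        show "length w' = length (actw \<sigma> w)" using len la by simp
        fix i assume i: "i < length w'"
        have "fst (w' ! i) = fst (actw \<sigma> w ! i)"
          using True i len la by (metis nth_map)
        moreover have "snd (w' ! i) = snd (actw \<sigma> w ! i)" using h i len by simp
        ultimately show "w' ! i = actw \<sigma> w ! i" by (simp add: prod_eq_iff)
      qed
    next
      assume "w' = actw \<sigma> w" then show "\<forall>i<length w. snd (w' ! i) = snd (actw \<sigma> w ! i)" by simp
    qed
    finally show ?thesis unfolding cot_act_def mf using True by simp
  qed
qed


lemma phit_natural:
  assumes fin: "finite A" and bij: "bij_betw \<sigma> A A'" and R: "R \<in> top_basis A"
  shows "(phit A' (top_act \<sigma> R) :: word \<Rightarrow> 'k::field) = lincomb (phit A R) (cot_act Qactt \<sigma>)"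
proof (rule ext)
  fix w' :: word
  define \<tau> where "\<tau> = inv_into A \<sigma>"
  have inj: "inj_on \<sigma> A" using bij bij_betw_imp_inj_on by blast
  have bijt: "bij_betw \<tau> A' A" unfolding \<tau>_def using bij by (rule bij_betw_inv_into)
  have injt: "inj_on \<tau> A'" using bijt bij_betw_imp_inj_on by blast
  have inv1: "\<forall>x\<in>A. \<tau> (\<sigma> x) = x" unfolding \<tau>_def using inj by simp
  have inv2: "\<forall>y\<in>A'. \<sigma> (\<tau> y) = y" unfolding \<tau>_def using bij bij_betw_imp_surj_on f_inv_into_f by metis
  have finS: "finite (supp (phit A R :: word \<Rightarrow> 'k))" using phit_finsupp[OF fin] unfolding finsupp_on_def by blast
  have lc: "(lincomb (phit A R) (cot_act Qactt \<sigma>) w' :: 'k) =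
      (\<Sum>w\<in>supp (phit A R :: word \<Rightarrow> 'k). phit A R w * (if w' = actw \<sigma> w then 1 else 0))"
    unfolding lincomb_def
  proof (rule sum.cong[OF refl])
    fix w assume "w \<in> supp (phit A R :: word \<Rightarrow> 'k)"
    then have wb: "w \<in> cot_basis QBt A" using phit_supp by blast
    have "(cot_act Qactt \<sigma> w w' :: 'k) = (if w' = actw \<sigma> w then 1 else 0)"
      by (rule cot_act_basis[OF bij wb])
    then show "(phit A R w * cot_act Qactt \<sigma> w w' :: 'k) = phit A R w * (if w' = actw \<sigma> w then 1 else 0)"
      by simp
  qed
  show "(phit A' (top_act \<sigma> R) w' :: 'k) = lincomb (phit A R) (cot_act Qactt \<sigma>) w'"
  proof (cases "w' \<in> cot_basis QBt A'")
    case True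
    define w0 where "w0 = actw \<tau> w'"
    have w0: "w0 \<in> cot_basis QBt A" unfolding w0_def using actw_cot_basis[OF bijt True] .
    have aw0: "actw \<sigma> w0 = w'" unfolding w0_def using actw_cancel[OF injt inv2 True] .
    have "(\<Sum>w\<in>supp (phit A R :: word \<Rightarrow> 'k). phit A R w * (if w' = actw \<sigma> w then 1 else (0::'k))) =
        (if w0 \<in> supp (phit A R :: word \<Rightarrow> 'k) then phit A R w0 * (if w' = actw \<sigma> w0 then 1 else 0) else 0)"
    proof (rule sum_single[OF finS, where a=w0])
      fix w assume w: "w \<in> supp (phit A R :: word \<Rightarrow> 'k)" "w \<noteq> w0"
      then have wb: "w \<in> cot_basis QBt A" using phit_supp by blast
      have "w' \<noteq> actw \<sigma> w"
      proof
        assume "w' = actw \<sigma> w"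
        then have "actw \<tau> w' = w" using actw_cancel[OF inj inv1 wb] by simp
        then show False using w(2) unfolding w0_def by simp
      qed
      then show "(phit A R w * (if w' = actw \<sigma> w then 1 else 0) :: 'k) = 0" by simp
    qed
    also have "\<dots> = phit A R w0" using aw0 unfolding supp_def by auto
    also have "\<dots> = phit A' (top_act \<sigma> R) w'"
    proof -
      have "(phit A' (top_act \<sigma> R) (actw \<sigma> w0) :: 'k) = phit A R w0" by (rule phit_act[OF bij R w0])
      then show ?thesis using aw0 by simp
    qed
    finally show ?thesis using lc by simp
  next
    case False
    then have "(phit A' (top_act \<sigma> R) w' :: 'k) = 0" unfolding phit_def by simp
    moreover have "(\<Sum>w\<in>supp (phit A R :: word \<Rightarrow> 'k). phit A R w * (if w' = actw \<sigma> w then 1 else 0)) = (0::'k)"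
    proof (rule sum.neutral, rule ballI)
      fix w assume "w \<in> supp (phit A R :: word \<Rightarrow> 'k)"
      then have "actw \<sigma> w \<in> cot_basis QBt A'" using phit_supp actw_cot_basis[OF bij] by blast
      then have "w' \<noteq> actw \<sigma> w" using False by auto
      then show "(phit A R w * (if w' = actw \<sigma> w then 1 else 0) :: 'k) = 0" by simp
    qed
    ultimately show ?thesis using lc by simp
  qed
qed


fun ordsum :: "word \<Rightarrow> nat rel" where
  "ordsum [] = {}"
| "ordsum ((X, b) # w) = decode b \<union> X \<times> (\<Union>(fst ` set w)) \<union> ordsum w"

lemma cot_basis_Cons:
  assumes "(X, b) # w \<in> cot_basis QBt A"
  shows "w \<in> cot_basis QBt (A - X)" "X \<subseteq> A" "X \<noteq> {}" "finite X" "b \<in> QBt X"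
    "\<Union>(fst ` set w) = A - X"
proof -
  have sc: "set_composition A (X # map fst w)" and bq: "\<forall>(Y, c)\<in>set ((X, b) # w). c \<in> QBt Y"
    using assms unfolding cot_basis_def by auto
  have ne: "\<forall>Y\<in>set (X # map fst w). finite Y \<and> Y \<noteq> {}" and d: "distinct (X # map fst w)"
    and p: "\<forall>Y\<in>set (X # map fst w). \<forall>Z\<in>set (X # map fst w). Y \<noteq> Z \<longrightarrow> Y \<inter> Z = {}"
    and u: "\<Union>(set (X # map fst w)) = A" using sc unfolding set_composition_alt by blast+
  have dX: "X \<inter> Y = {}" if "Y \<in> set (map fst w)" for Y
  proof -
    have "X \<noteq> Y" using d that by auto
    then show ?thesis using p that by auto
  qed
  have uw: "\<Union>(set (map fst w)) = A - X"
  proof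
    show "\<Union>(set (map fst w)) \<subseteq> A - X" using u dX by auto
    show "A - X \<subseteq> \<Union>(set (map fst w))" using u by auto
  qed
  then show "\<Union>(fst ` set w) = A - X" by simp
  have "set_composition (A - X) (map fst w)"
    unfolding set_composition_alt using ne d p uw by auto
  moreover have "\<forall>(Y, c)\<in>set w. c \<in> QBt Y" using bq by auto
  ultimately show "w \<in> cot_basis QBt (A - X)" unfolding cot_basis_def by blast
  show "X \<subseteq> A" "X \<noteq> {}" "finite X" using u ne by auto
  show "b \<in> QBt X" using bq by auto
qed

lemma ordsum_props:
  assumes "w \<in> cot_basis QBt A"
  shows "ordsum w \<in> top_basis A"
  using assms
proof (induction w arbitrary: A)
  case Nil
  then have "A = {}" unfolding cot_basis_def set_composition_alt by auto
  then show ?case by (simp add: top_basis_empty)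
next
  case (Cons p w)
  obtain X b where p: "p = (X, b)" by (cases p)
  note cb = cot_basis_Cons[OF Cons.prems[unfolded p]]
  define Y where "Y = A - X"
  have IH: "ordsum w \<in> top_basis Y" using Cons.IH cb(1) unfolding Y_def by blast
  have T: "decode b \<in> top_basis X" using QBtD(2)[OF cb(5)] .
  have R: "ordsum (p # w) = decode b \<union> X \<times> Y \<union> ordsum w" using cb(6) p unfolding Y_def by simp
  have TX: "decode b \<subseteq> X \<times> X" using top_basis_sub[OF T] .
  have RY: "ordsum w \<subseteq> Y \<times> Y" using top_basis_sub[OF IH] .
  have XY: "X \<inter> Y = {}" "X \<union> Y = A" unfolding Y_def using cb(2) by auto
  have reflT: "\<forall>x\<in>X. (x, x) \<in> decode b" and trT: "trans (decode b)"
    using T unfolding top_basis_def quasi_poset_on_def by auto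
  have reflR: "\<forall>x\<in>Y. (x, x) \<in> ordsum w" and trR: "trans (ordsum w)"
    using IH unfolding top_basis_def quasi_poset_on_def by auto
  have "decode b \<union> X \<times> Y \<union> ordsum w \<subseteq> A \<times> A" using TX RY XY by blast
  moreover have "\<forall>x\<in>A. (x, x) \<in> decode b \<union> X \<times> Y \<union> ordsum w" using reflT reflR XY by blast
  moreover have "trans (decode b \<union> X \<times> Y \<union> ordsum w)"
  proof (rule transI)
    fix x y z assume 1: "(x, y) \<in> decode b \<union> X \<times> Y \<union> ordsum w" and 2: "(y, z) \<in> decode b \<union> X \<times> Y \<union> ordsum w"
    show "(x, z) \<in> decode b \<union> X \<times> Y \<union> ordsum w"
    proof (cases "(x, y) \<in> decode b")
      case True
      then have yX: "y \<in> X" "x \<in> X" using TX by auto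
      then have "(y, z) \<in> decode b \<or> (y, z) \<in> X \<times> Y" using 2 RY XY by blast
      then show ?thesis
      proof
        assume "(y, z) \<in> decode b" then show ?thesis using True trT unfolding trans_def by blast
      next
        assume "(y, z) \<in> X \<times> Y" then show ?thesis using yX by blast
      qed
    next
      case False
      then have "(x, y) \<in> X \<times> Y \<or> (x, y) \<in> ordsum w" using 1 by blast
      then show ?thesis
      proof
        assume xy: "(x, y) \<in> X \<times> Y"
        then have "y \<in> Y" by blast
        then have "(y, z) \<in> ordsum w" using 2 TX XY by blast
        then have "z \<in> Y" using RY by blast
        then show ?thesis using xy by blast
      next
        assume xy: "(x, y) \<in> ordsum w"
        then have "y \<in> Y" using RY by blast
        then have "(y, z) \<in> ordsum w" using 2 TX XY by blast
        then show ?thesis using xy trR unfolding trans_def by blast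
      qed
    qed
  qed
  ultimately show ?case unfolding R top_basis_def quasi_poset_on_def by blast
qed

lemma ordsum_Cons_facts:
  assumes w: "(X, b) # w \<in> cot_basis QBt A" and R: "R = ordsum ((X, b) # w)"
  shows "restr R X = decode b" "restr R (A - X) = ordsum w" "X \<times> (A - X) \<subseteq> R"
    "\<And>p q. (p, q) \<in> R \<Longrightarrow> p \<in> A - X \<Longrightarrow> q \<in> A - X"
proof -
  note cb = cot_basis_Cons[OF w]
  have T: "decode b \<in> top_basis X" using QBtD(2)[OF cb(5)] .
  have TX: "decode b \<subseteq> X \<times> X" using top_basis_sub[OF T] .
  have RY: "ordsum w \<subseteq> (A - X) \<times> (A - X)" using top_basis_sub[OF ordsum_props[OF cb(1)]] .
  have RR: "R = decode b \<union> X \<times> (A - X) \<union> ordsum w" using R cb(6) by simp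
  show "restr R X = decode b" unfolding RR restr_def using TX RY by blast
  show "restr R (A - X) = ordsum w" unfolding RR restr_def using TX RY by blast
  show "X \<times> (A - X) \<subseteq> R" unfolding RR by blast
  show "\<And>p q. (p, q) \<in> R \<Longrightarrow> p \<in> A - X \<Longrightarrow> q \<in> A - X" unfolding RR using TX RY by blast
qed

lemma ordsum_first_block:
  assumes w1: "(X1, b1) # w1 \<in> cot_basis QBt A" and w2: "(X2, b2) # w2 \<in> cot_basis QBt A"
    and eq: "ordsum ((X1, b1) # w1) = ordsum ((X2, b2) # w2)" and sub: "X2 \<subseteq> X1"
  shows "X1 = X2"
proof (rule ccontr)
  assume ne: "X1 \<noteq> X2"
  define R where "R = ordsum ((X1, b1) # w1)"
  note f1 = ordsum_Cons_facts[OF w1 R_def]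
  have R2: "R = ordsum ((X2, b2) # w2)" using eq R_def by simp
  note f2 = ordsum_Cons_facts[OF w2 R2]
  note c1 = cot_basis_Cons[OF w1] and c2 = cot_basis_Cons[OF w2]
  have ind: "indec X1 (decode b1)" using QBtD(3)[OF c1(5)] .
  define C where "C = X2"
  define D where "D = X1 - X2"
  have "C \<union> D = X1" unfolding C_def D_def using sub by blast
  moreover have "C \<inter> D = {}" unfolding C_def D_def by blast
  moreover have "C \<noteq> {}" unfolding C_def using c2(3) .
  moreover have "D \<noteq> {}" unfolding D_def using sub ne by blast
  moreover have "C \<times> D \<subseteq> decode b1"
  proof
    fix p assume p: "p \<in> C \<times> D"
    have "D \<subseteq> A - X2" unfolding D_def using c1(2) by blast
    then have "p \<in> R" using p f2(3) unfolding C_def by blast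
    moreover have "p \<in> X1 \<times> X1" using p sub unfolding C_def D_def by blast
    ultimately show "p \<in> decode b1" using f1(1) unfolding restr_def by blast
  qed
  moreover have "decode b1 \<inter> (D \<times> C) = {}"
  proof (rule ccontr)
    assume "decode b1 \<inter> (D \<times> C) \<noteq> {}"
    then obtain p q where pq: "(p, q) \<in> decode b1" "p \<in> D" "q \<in> C" by blast
    have "(p, q) \<in> R" using pq(1) f1(1) unfolding restr_def by blast
    moreover have "p \<in> A - X2" using pq(2) c1(2) unfolding D_def by blast
    ultimately have "q \<in> A - X2" using f2(4) by blast
    then show False using pq(3) unfolding C_def by blast
  qed
  ultimately show False using ind unfolding indec_def by blast
qed

lemma ordsum_inj:
  "w1 \<in> cot_basis QBt A \<Longrightarrow> w2 \<in> cot_basis QBt A \<Longrightarrow> ordsum w1 = ordsum w2 \<Longrightarrow> w1 = w2"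
proof (induction w1 arbitrary: A w2)
  case Nil
  then have "A = {}" unfolding cot_basis_def set_composition_alt by auto
  then show ?case using Nil cot_basis_empty by auto
next
  case (Cons p1 w1)
  obtain X1 b1 where p1: "p1 = (X1, b1)" by (cases p1)
  have A: "A \<noteq> {}" using cot_basis_Cons(2,3)[OF Cons.prems(1)[unfolded p1]] by blast
  obtain p2 w2' where w2: "w2 = p2 # w2'"
    using Cons.prems(2) A by (cases w2) (auto simp: cot_basis_def set_composition_alt)
  obtain X2 b2 where p2: "p2 = (X2, b2)" by (cases p2)
  have h1: "(X1, b1) # w1 \<in> cot_basis QBt A" using Cons.prems(1) p1 by simp
  have h2: "(X2, b2) # w2' \<in> cot_basis QBt A" using Cons.prems(2) w2 p2 by simp
  have eq: "ordsum ((X1, b1) # w1) = ordsum ((X2, b2) # w2')" using Cons.prems(3) p1 p2 w2 by simp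
  have cmp: "X1 \<subseteq> X2 \<or> X2 \<subseteq> X1"
  proof (rule ccontr)
    assume "\<not> (X1 \<subseteq> X2 \<or> X2 \<subseteq> X1)"
    then obtain x y where xy: "x \<in> X1" "x \<notin> X2" "y \<in> X2" "y \<notin> X1" by blast
    define R where "R = ordsum ((X1, b1) # w1)"
    have R2: "R = ordsum ((X2, b2) # w2')" using eq R_def by simp
    note f1 = ordsum_Cons_facts[OF h1 R_def] and f2 = ordsum_Cons_facts[OF h2 R2]
    have xA: "x \<in> A" "y \<in> A" using cot_basis_Cons(2)[OF h1] cot_basis_Cons(2)[OF h2] xy by blast+
    have "(y, x) \<in> R" using f2(3) xy xA by blast
    moreover have "y \<in> A - X1" using xy xA by blast
    ultimately have "x \<in> A - X1" using f1(4) by blast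
    then show False using xy by blast
  qed
  have X: "X1 = X2"
    using cmp ordsum_first_block[OF h1 h2 eq] ordsum_first_block[OF h2 h1 eq[symmetric]] by blast
  define R where "R = ordsum ((X1, b1) # w1)"
  have R2: "R = ordsum ((X1, b2) # w2')" using eq R_def X by simp
  have h2': "(X1, b2) # w2' \<in> cot_basis QBt A" using h2 X by simp
  note f1 = ordsum_Cons_facts[OF h1 R_def] and f2 = ordsum_Cons_facts[OF h2' R2]
  have "decode b1 = decode b2" using f1(1) f2(1) by simp
  then have b: "b1 = b2"
    using QBtD(4)[OF cot_basis_Cons(5)[OF h1]] QBtD(4)[OF cot_basis_Cons(5)[OF h2']] by metis
  have "ordsum w1 = ordsum w2'" using f1(2) f2(2) by simp
  then have "w1 = w2'" using Cons.IH[OF cot_basis_Cons(1)[OF h1] cot_basis_Cons(1)[OF h2']] by blast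
  then show ?case using p1 p2 w2 X b by simp
qed

lemma card_cot_le:
  assumes "finite A"
  shows "card (cot_basis QBt A) \<le> card (top_basis A)"
proof -
  have "inj_on ordsum (cot_basis QBt A)" using ordsum_inj by (meson inj_onI)
  moreover have "ordsum ` cot_basis QBt A \<subseteq> top_basis A" using ordsum_props by blast
  ultimately show ?thesis using card_inj_on_le finite_top_basis[OF assms] by blast
qed


definition ysum :: "(nat rel \<Rightarrow> 'k::comm_ring_1) \<Rightarrow> nat set \<Rightarrow> nat set \<Rightarrow> nat rel \<Rightarrow> nat rel \<Rightarrow> 'k" where
  "ysum x B C U V = (\<Sum>R\<in>{R\<in>supp x. upclosed R B \<and> restr R C = U \<and> restr R B = V}. x R)"

lemma group_sum:
  fixes x :: "nat rel \<Rightarrow> 'k::comm_ring_1" and H :: "nat rel \<Rightarrow> nat rel \<Rightarrow> 'k"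
  assumes fin: "finite (supp x)"
  shows "(\<Sum>R\<in>supp x. if upclosed R B then x R * H (restr R C) (restr R B) else 0) =
    (\<Sum>U\<in>(\<lambda>R. restr R C) ` supp x. \<Sum>V\<in>(\<lambda>R. restr R B) ` supp x. ysum x B C U V * H U V)"
proof -
  define S where "S = {R\<in>supp x. upclosed R B}"
  define g where "g = (\<lambda>R. (restr R C, restr R B))"
  define TT where "TT = ((\<lambda>R. restr R C) ` supp x) \<times> ((\<lambda>R. restr R B) ` supp x)"
  have finS: "finite S" unfolding S_def using fin by simp
  have finT: "finite TT" unfolding TT_def using fin by simp
  have gS: "g ` S \<subseteq> TT" unfolding g_def TT_def S_def by auto
  have "(\<Sum>R\<in>supp x. if upclosed R B then x R * H (restr R C) (restr R B) else 0) =
      (\<Sum>R\<in>S. x R * H (restr R C) (restr R B))"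
    unfolding S_def using fin by (simp add: sum.inter_filter)
  also have "\<dots> = (\<Sum>p\<in>TT. \<Sum>R\<in>{R \<in> S. g R = p}. x R * H (restr R C) (restr R B))"
    by (rule sum.group[OF finS finT gS, symmetric])
  also have "\<dots> = (\<Sum>p\<in>TT. ysum x B C (fst p) (snd p) * H (fst p) (snd p))"
  proof (rule sum.cong[OF refl])
    fix p assume "p \<in> TT"
    have se: "{R \<in> S. g R = p} = {R\<in>supp x. upclosed R B \<and> restr R C = fst p \<and> restr R B = snd p}"
      unfolding S_def g_def by (cases p) auto
    have "(\<Sum>R\<in>{R \<in> S. g R = p}. x R * H (restr R C) (restr R B)) =
        (\<Sum>R\<in>{R \<in> S. g R = p}. x R * H (fst p) (snd p))"
      by (rule sum.cong[OF refl]) (auto simp: g_def)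
    also have "\<dots> = (\<Sum>R\<in>{R \<in> S. g R = p}. x R) * H (fst p) (snd p)"
      by (simp add: sum_distrib_right)
    also have "\<dots> = ysum x B C (fst p) (snd p) * H (fst p) (snd p)"
      unfolding ysum_def se ..
    finally show "(\<Sum>R\<in>{R \<in> S. g R = p}. x R * H (restr R C) (restr R B)) =
        ysum x B C (fst p) (snd p) * H (fst p) (snd p)" .
  qed
  also have "\<dots> = (\<Sum>U\<in>(\<lambda>R. restr R C) ` supp x. \<Sum>V\<in>(\<lambda>R. restr R B) ` supp x. ysum x B C U V * H U V)"
    unfolding TT_def by (simp add: sum.cartesian_product split_beta)
  finally show ?thesis .
qed

definition prim :: "nat set \<Rightarrow> (nat rel \<Rightarrow> 'k::comm_ring_1) \<Rightarrow> bool" where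
  "prim A x \<longleftrightarrow> (\<forall>B U V. B \<subseteq> A \<longrightarrow> B \<noteq> {} \<longrightarrow> B \<noteq> A \<longrightarrow> ysum x B (A - B) U V = 0)"

lemma prim_Ea:
  fixes x :: "nat rel \<Rightarrow> 'k::field"
  assumes fin: "finite A" and fs: "finite (supp x)" and pr: "prim A x" and a: "a \<in> A"
  shows "(\<Sum>R\<in>supp x. x R * Ea a A R T) = x T"
proof -
  define BB0 where "BB0 = {B. B \<subseteq> A \<and> a \<in> B \<and> B \<noteq> A}"
  define G where "G B U V = (if restr T (A - B) = U \<and> T \<subseteq> (A - B) \<times> (A - B) \<union> B \<times> B
      then (Ea a B V (restr T B) :: 'k) else 0)" for B U V
  have finBB: "finite BB0" unfolding BB0_def using fin by (auto intro: finite_subset[of _ "Pow A"])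
  have e: "Ea a A R T = (if T = R then 1 else 0) -
      (\<Sum>B\<in>BB0. if upclosed R B then G B (restr R (A - B)) (restr R B) else 0)" for R
  proof -
    have "{B. B \<subseteq> A \<and> a \<in> B \<and> B \<noteq> A \<and> upclosed R B} = {B\<in>BB0. upclosed R B}"
      unfolding BB0_def by auto
    then show ?thesis
      using fin unfolding G_def by (subst Ea.simps) (simp add: sum.inter_filter[OF finBB])
  qed
  have z: "(\<Sum>R\<in>supp x. if upclosed R B then x R * G B (restr R (A - B)) (restr R B) else 0) = 0"
    if B: "B \<in> BB0" for B
  proof -
    have "B \<subseteq> A" "B \<noteq> {}" "B \<noteq> A" using B a unfolding BB0_def by auto
    then have "ysum x B (A - B) U V = 0" for U V using pr unfolding prim_def by blast
    then show ?thesis using group_sum[OF fs, where B=B and C="A - B" and H="G B"] by simp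
  qed
  have "(\<Sum>R\<in>supp x. x R * Ea a A R T) =
      (\<Sum>R\<in>supp x. x R * (if T = R then 1 else 0)) -
      (\<Sum>R\<in>supp x. \<Sum>B\<in>BB0. if upclosed R B then x R * G B (restr R (A - B)) (restr R B) else 0)"
  proof -
    have step: "x R * Ea a A R T = x R * (if T = R then 1 else 0) -
        (\<Sum>B\<in>BB0. if upclosed R B then x R * G B (restr R (A - B)) (restr R B) else 0)" for R
    proof -
      have "x R * (\<Sum>B\<in>BB0. if upclosed R B then G B (restr R (A - B)) (restr R B) else 0) =
          (\<Sum>B\<in>BB0. if upclosed R B then x R * G B (restr R (A - B)) (restr R B) else 0)"
        by (auto simp: sum_distrib_left intro!: sum.cong)
      then show ?thesis unfolding e by (simp add: right_diff_distrib)
    qed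
    show ?thesis unfolding step by (simp add: sum_subtractf)
  qed
  also have "(\<Sum>R\<in>supp x. \<Sum>B\<in>BB0. if upclosed R B then x R * G B (restr R (A - B)) (restr R B) else 0) =
      (\<Sum>B\<in>BB0. \<Sum>R\<in>supp x. if upclosed R B then x R * G B (restr R (A - B)) (restr R B) else 0)"
    by (rule sum.swap)
  also have "\<dots> = 0" using z by simp
  also have "(\<Sum>R\<in>supp x. x R * (if T = R then 1 else 0)) = x T"
    using fs by (cases "T \<in> supp x") (auto simp: supp_def if_distrib sum.delta' cong: if_cong)
  finally show ?thesis by simp
qed


lemma supp_sub_top: "finsupp_on (top_basis A) x \<Longrightarrow> R \<in> supp x \<Longrightarrow> R \<in> top_basis A"
  unfolding finsupp_on_def by blast

lemma phit_single:
  assumes fin: "finite A" and T: "T \<in> top_basis A" "indec A T" and R: "R \<in> top_basis A"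
  shows "(phit A R [(A, code T)] :: 'k::field) = Ee A R T"
proof -
  have ne: "A \<noteq> {}" using T(2) unfolding indec_def by blast
  have cq: "code T \<in> QBt A" using QBtI[OF fin T] .
  have dT: "decode (code T) = T" using decode_code top_basis_finite_rel[OF fin T(1)] by blast
  have "[(A, code T)] \<in> cot_basis QBt A"
    unfolding cot_basis_def set_composition_alt using fin ne cq by auto
  moreover have "restr R A = R" using top_basis_sub[OF R] by (rule restr_id)
  ultimately show ?thesis unfolding phit_def pit_def using cq dT by simp
qed

lemma phit_inj:
  fixes x :: "nat rel \<Rightarrow> 'k::field_char_0"
  shows "finite A \<Longrightarrow> finsupp_on (top_basis A) x \<Longrightarrow> lincomb x (phit A) = (\<lambda>_. 0) \<Longrightarrow> x = (\<lambda>_. 0)"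
proof (induction "card A" arbitrary: A x rule: less_induct)
  case less
  note fin = less.prems(1) and fsx = less.prems(2)
  have fs: "finite (supp x)" using fsx unfolding finsupp_on_def by blast
  have sx: "supp x \<subseteq> top_basis A" using fsx unfolding finsupp_on_def by blast
  have L0: "(\<Sum>R\<in>supp x. x R * phit A R w) = 0" for w
    using fun_cong[OF less.prems(3), of w] unfolding lincomb_def by simp
  have IH: "\<And>A' (x' :: nat rel \<Rightarrow> 'k). card A' < card A \<Longrightarrow> finite A' \<Longrightarrow> finsupp_on (top_basis A') x' \<Longrightarrow>
      lincomb x' (phit A') = (\<lambda>_. 0) \<Longrightarrow> x' = (\<lambda>_. 0)"
    using less.hyps by blast
  show ?case
  proof (cases "A = {}")
    case True
    have "x R = 0" for R
    proof (rule ccontr)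
      assume nz: "x R \<noteq> 0"
      then have "R \<in> supp x" unfolding supp_def by simp
      then have R0: "R = {}" using sx True top_basis_empty by auto
      have "supp x = {{}}" using sx True top_basis_empty \<open>R \<in> supp x\<close> R0 by auto
      then have "x {} * phit {} {} [] = (0 :: 'k)" using L0[of "[]"] True by simp
      moreover have "(phit {} {} [] :: 'k) = 1" using phit_unit unfolding delta_vec_def by metis
      ultimately show False using nz R0 by simp
    qed
    then show ?thesis by auto
  next
    case False
    have pr: "prim A x" unfolding prim_def
    proof (intro allI impI)
      fix B U V assume B: "B \<subseteq> A" "B \<noteq> {}" "B \<noteq> A"
      define C where "C = A - B"
      have CB: "C \<union> B = A" "C \<inter> B = {}" "C \<noteq> {}" unfolding C_def using B by auto
      have finC: "finite C" "finite B" using fin B(1) unfolding C_def by (auto intro: finite_subset)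
      have cardC: "card C < card A" "card B < card A"
        using fin B CB unfolding C_def by (auto intro!: psubset_card_mono)
      define UU where "UU = (\<lambda>R. restr R C) ` supp x"
      define VV where "VV = (\<lambda>R. restr R B) ` supp x"
      have finUV: "finite UU" "finite VV" unfolding UU_def VV_def using fs by auto
      have UUt: "UU \<subseteq> top_basis C" unfolding UU_def using sx top_basis_restr CB by blast
      have VVt: "VV \<subseteq> top_basis B" unfolding VV_def using sx top_basis_restr B by blast
      have key: "(\<Sum>U\<in>UU. \<Sum>V\<in>VV. ysum x B C U V * (phit C U u * phit B V v)) = (0 :: 'k)"
        if u: "u \<in> cot_basis QBt C" and v: "v \<in> cot_basis QBt B" for u v
      proof -
        have "(0 :: 'k) = (\<Sum>R\<in>supp x. x R * phit A R (u @ v))" using L0 by simp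
        also have "\<dots> = (\<Sum>R\<in>supp x. if upclosed R B then x R * (phit C (restr R C) u * phit B (restr R B) v) else 0)"
        proof (rule sum.cong[OF refl])
          fix R assume "R \<in> supp x"
          then have "R \<in> top_basis (C \<union> B)" using sx CB by auto
          then have "(phit (C \<union> B) R (u @ v) :: 'k) =
              (if upclosed R B then phit C (restr R C) u * phit B (restr R B) v else 0)"
            using phit_coprod[OF CB(2) _ u v] by blast
          then show "x R * phit A R (u @ v) =
              (if upclosed R B then x R * (phit C (restr R C) u * phit B (restr R B) v) else 0)"
            using CB by simp
        qed
        also have "\<dots> = (\<Sum>U\<in>UU. \<Sum>V\<in>VV. ysum x B C U V * (phit C U u * phit B V v))"
          unfolding UU_def VV_def by (rule group_sum[OF fs])
        finally show ?thesis by simp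
      qed
      have zU: "(\<Sum>V\<in>VV. ysum x B C U V * phit B V v) = (0 :: 'k)" if U: "U \<in> UU" and v: "v \<in> cot_basis QBt B" for U v
      proof -
        define z where "z U' = (if U' \<in> UU then (\<Sum>V\<in>VV. ysum x B C U' V * phit B V v) else (0 :: 'k))" for U'
        have sz: "supp z \<subseteq> UU" unfolding supp_def z_def by auto
        have fz: "finsupp_on (top_basis C) z" unfolding finsupp_on_def using sz finUV UUt finite_subset by blast
        have "lincomb z (phit C) = (\<lambda>_. 0)"
        proof (rule ext)
          fix u
          have "lincomb z (phit C) u = (\<Sum>U'\<in>UU. z U' * phit C U' u)"
            by (rule lincomb_superset[OF finUV(1) sz])
          also have "\<dots> = (\<Sum>U'\<in>UU. \<Sum>V\<in>VV. ysum x B C U' V * (phit C U' u * phit B V v))"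
            by (rule sum.cong[OF refl]) (simp add: z_def sum_distrib_right sum_distrib_left mult_ac)
          also have "\<dots> = 0"
          proof (cases "u \<in> cot_basis QBt C")
            case True then show ?thesis using key[OF True v] by simp
          next
            case False then show ?thesis unfolding phit_def by simp
          qed
          finally show "lincomb z (phit C) u = 0" .
        qed
        then have "z = (\<lambda>_. 0)" using IH[OF cardC(1) finC(1) fz] by blast
        then show ?thesis using fun_cong[of z "\<lambda>_. 0" U] U unfolding z_def by simp
      qed
      have yz: "ysum x B C U' V' = 0" for U' V'
      proof (cases "U' \<in> UU \<and> V' \<in> VV")
        case False
        then have e: "{R\<in>supp x. upclosed R B \<and> restr R C = U' \<and> restr R B = V'} = {}"
          unfolding UU_def VV_def by auto
        show ?thesis unfolding ysum_def e by simp
      next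
        case True
        define y where "y V = (if V \<in> VV then ysum x B C U' V else (0 :: 'k))" for V
        have sy: "supp y \<subseteq> VV" unfolding supp_def y_def by auto
        have fy: "finsupp_on (top_basis B) y" unfolding finsupp_on_def using sy finUV VVt finite_subset by blast
        have "lincomb y (phit B) = (\<lambda>_. 0)"
        proof (rule ext)
          fix v
          have "lincomb y (phit B) v = (\<Sum>V\<in>VV. y V * phit B V v)"
            by (rule lincomb_superset[OF finUV(2) sy])
          also have "\<dots> = (\<Sum>V\<in>VV. ysum x B C U' V * phit B V v)"
            unfolding y_def by (auto intro!: sum.cong)
          also have "\<dots> = 0"
          proof (cases "v \<in> cot_basis QBt B")
            case True then show ?thesis using zU[of U' v] \<open>U' \<in> UU \<and> V' \<in> VV\<close> by simp
          next
            case False then show ?thesis unfolding phit_def by simp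
          qed
          finally show "lincomb y (phit B) v = 0" .
        qed
        then have "y = (\<lambda>_. 0)" using IH[OF cardC(2) finC(2) fy] by blast
        then show ?thesis using fun_cong[of y "\<lambda>_. 0" V'] True unfolding y_def by simp
      qed
      show "ysum x B (A - B) U V = 0" using yz unfolding C_def by blast
    qed
    have ind0: "x T = 0" if T: "T \<in> top_basis A" "indec A T" for T
    proof -
      have "(0 :: 'k) = (\<Sum>R\<in>supp x. x R * phit A R [(A, code T)])" using L0 by simp
      also have "\<dots> = (\<Sum>R\<in>supp x. x R * Ee A R T)"
        by (rule sum.cong[OF refl]) (use phit_single[OF fin T] sx in auto)
      also have "\<dots> = (\<Sum>a\<in>A. \<Sum>R\<in>supp x. x R * Ea a A R T)"
        unfolding Ee_def by (simp add: sum_distrib_left sum.swap[of _ "supp x"])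
      also have "\<dots> = (\<Sum>a\<in>A. x T)"
        by (rule sum.cong[OF refl]) (rule prim_Ea[OF fin fs pr])
      also have "\<dots> = of_nat (card A) * x T" by simp
      finally have "of_nat (card A) * x T = 0" by simp
      moreover have "(of_nat (card A) :: 'k) \<noteq> 0" using fin False by simp
      ultimately show ?thesis by simp
    qed
    show ?thesis
    proof (rule ccontr)
      assume "x \<noteq> (\<lambda>_. 0)"
      then obtain R1 where "x R1 \<noteq> 0" by auto
      then have "R1 \<in> supp x" unfolding supp_def by simp
      then obtain R0 where R0: "R0 \<in> supp x" and minR: "\<forall>R. R \<in> supp x \<longrightarrow> card R0 \<le> card R"
        using ex_has_least_nat[of "\<lambda>R. R \<in> supp x" R1 card] by blast
      have R0t: "R0 \<in> top_basis A" using R0 sx by blast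
      have xR0: "x R0 \<noteq> 0" using R0 unfolding supp_def by simp
      then have "\<not> indec A R0" using ind0 R0t by blast
      then obtain C B where CB: "C \<union> B = A" "C \<inter> B = {}" "C \<noteq> {}" "B \<noteq> {}" "C \<times> B \<subseteq> R0" "R0 \<inter> (B \<times> C) = {}"
        using False unfolding indec_def by blast
      have R0A: "R0 \<subseteq> A \<times> A" using top_basis_sub[OF R0t] .
      have C: "A - B = C" using CB by blast
      have up0: "upclosed R0 B"
        unfolding upclosed_def using CB R0A by blast
      define F where "F = {R\<in>supp x. upclosed R B \<and> restr R (A - B) = restr R0 (A - B) \<and> restr R B = restr R0 B}"
      have "F = {R0}"
      proof
        show "{R0} \<subseteq> F" unfolding F_def using R0 up0 by auto
        show "F \<subseteq> {R0}"
        proof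
          fix R assume RF: "R \<in> F"
          then have Rs: "R \<in> supp x" and upR: "upclosed R B" and rC: "restr R C = restr R0 C"
            and rB: "restr R B = restr R0 B" unfolding F_def C by auto
          have RA: "R \<subseteq> A \<times> A" using top_basis_sub Rs sx by blast
          have sub: "R \<subseteq> R0"
          proof
            fix p assume p: "p \<in> R"
            obtain a b where ab: "p = (a, b)" by (cases p)
            have "a \<in> A" "b \<in> A" using p ab RA by auto
            then consider "a \<in> C" "b \<in> C" | "a \<in> C" "b \<in> B" | "a \<in> B" "b \<in> C" | "a \<in> B" "b \<in> B"
              using CB(1) by blast
            then show "p \<in> R0"
            proof cases
              case 1 then have "p \<in> restr R C" using p ab unfolding restr_def by auto
              then show ?thesis using rC unfolding restr_def by auto
            next
              case 2 then show ?thesis using CB(5) ab by auto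
            next
              case 3 then have "b \<in> B" using upR p ab unfolding upclosed_def by blast
              then show ?thesis using 3 CB(2) by blast
            next
              case 4 then have "p \<in> restr R B" using p ab unfolding restr_def by auto
              then show ?thesis using rB unfolding restr_def by auto
            qed
          qed
          have finR0: "finite R0" using top_basis_finite_rel[OF fin R0t] .
          have "card R \<le> card R0" using card_mono[OF finR0 sub] .
          moreover have "card R0 \<le> card R" using minR Rs by blast
          ultimately have "R = R0" using card_subset_eq[OF finR0 sub] by simp
          then show "R \<in> {R0}" by simp
        qed
      qed
      then have "ysum x B (A - B) (restr R0 (A - B)) (restr R0 B) = x R0" unfolding ysum_def F_def by simp
      moreover have "ysum x B (A - B) (restr R0 (A - B)) (restr R0 B) = 0"
        using pr CB unfolding prim_def by blast
      ultimately show False using xR0 by simp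
    qed
  qed
qed


definition fscale :: "'k::field \<Rightarrow> ('x \<Rightarrow> 'k) \<Rightarrow> ('x \<Rightarrow> 'k)" where
  "fscale c f = (\<lambda>y. c * f y)"

interpretation fvs: vector_space "fscale :: 'k::field \<Rightarrow> ('x \<Rightarrow> 'k) \<Rightarrow> 'x \<Rightarrow> 'k"
  by unfold_locales (auto simp: fscale_def algebra_simps fun_eq_iff)

lemma fsum_apply: "(sum f I) y = (\<Sum>i\<in>I. f i y)"
  by (induction I rule: infinite_finite_induct) auto

lemma lincomb_as_sum:
  fixes c :: "'a \<Rightarrow> 'k::field"
  assumes "finite S" "supp c \<subseteq> S"
  shows "lincomb c F = (\<Sum>R\<in>S. fscale (c R) (F R))"
  by (rule ext) (simp add: lincomb_superset[OF assms] fsum_apply fscale_def)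

lemma phit_surj:
  fixes y :: "word \<Rightarrow> 'k::field_char_0"
  assumes fin: "finite A" and fy: "finsupp_on (cot_basis QBt A) y"
  shows "\<exists>x. finsupp_on (top_basis A) x \<and> lincomb x (phit A) = y"
proof -
  define TB where "TB = top_basis A"
  define CB where "CB = cot_basis QBt A"
  have finTB: "finite TB" unfolding TB_def using finite_top_basis[OF fin] .
  have finCB: "finite CB" unfolding CB_def using finite_cot_basis[OF fin] .
  have injphi: "inj_on (phit A :: nat rel \<Rightarrow> word \<Rightarrow> 'k) TB"
  proof (rule inj_onI)
    fix R1 R2 assume R: "R1 \<in> TB" "R2 \<in> TB" and eq: "(phit A R1 :: word \<Rightarrow> 'k) = phit A R2"
    define c where "c R = (if R = R1 then 1 else 0) - (if R = R2 then 1 else (0 :: 'k))" for R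
    have sc: "supp c \<subseteq> TB" unfolding supp_def c_def using R by auto
    have "lincomb c (phit A) = (\<lambda>_. (0 :: 'k))"
    proof (rule ext)
      fix w
      have "lincomb c (phit A) w = (\<Sum>R\<in>TB. c R * phit A R w)" by (rule lincomb_superset[OF finTB sc])
      also have "\<dots> = (\<Sum>R\<in>TB. (if R = R1 then phit A R w else 0) - (if R = R2 then phit A R w else 0))"
        by (rule sum.cong[OF refl]) (simp add: c_def left_diff_distrib)
      also have "\<dots> = (\<Sum>R\<in>TB. (if R = R1 then phit A R w else 0)) - (\<Sum>R\<in>TB. (if R = R2 then phit A R w else 0))"
        by (rule sum_subtractf)
      also have "\<dots> = phit A R1 w - phit A R2 w" using R finTB by (simp add: sum.delta')
      finally show "lincomb c (phit A) w = 0" using eq by simp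
    qed
    moreover have "finsupp_on (top_basis A) c" unfolding finsupp_on_def TB_def[symmetric]
      using sc finTB finite_subset by blast
    ultimately have "c = (\<lambda>_. 0)" using phit_inj[OF fin] by blast
    then have "c R1 = 0" by simp
    then show "R1 = R2" unfolding c_def by (auto split: if_splits)
  qed
  define S where "S = (phit A :: nat rel \<Rightarrow> word \<Rightarrow> 'k) ` TB"
  define T where "T = (delta_vec :: word \<Rightarrow> word \<Rightarrow> 'k) ` CB"
  have finS: "finite S" and finT: "finite T" unfolding S_def T_def using finTB finCB by auto
  have cardS: "card S = card TB" unfolding S_def using card_image[OF injphi] .
  have injd: "inj_on (delta_vec :: word \<Rightarrow> word \<Rightarrow> 'k) CB"
  proof (rule inj_onI)
    fix w1 w2 assume "(delta_vec w1 :: word \<Rightarrow> 'k) = delta_vec w2"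
    then have "(delta_vec w1 :: word \<Rightarrow> 'k) w1 = delta_vec w2 w1" by simp
    then show "w1 = w2" unfolding delta_vec_def by (auto split: if_splits)
  qed
  have cardT: "card T = card CB" unfolding T_def using card_image[OF injd] .
  have cle: "card T \<le> card S" using cardS cardT card_cot_le[OF fin] unfolding TB_def CB_def by simp
  have sumTB: "lincomb c (phit A) = (\<Sum>s\<in>S. fscale (u s) s)"
    if "\<And>R. R \<in> TB \<Longrightarrow> c R = u (phit A R)" "supp c \<subseteq> TB" for c :: "nat rel \<Rightarrow> 'k" and u :: "(word \<Rightarrow> 'k) \<Rightarrow> 'k"
  proof -
    have "lincomb c (phit A) = (\<Sum>R\<in>TB. fscale (c R) (phit A R))" by (rule lincomb_as_sum[OF finTB that(2)])
    also have "\<dots> = (\<Sum>R\<in>TB. fscale (u (phit A R)) (phit A R))" using that(1) by simp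
    also have "\<dots> = (\<Sum>s\<in>S. fscale (u s) s)" unfolding S_def by (simp add: sum.reindex[OF injphi])
    finally show ?thesis .
  qed
  have indep: "fvs.independent S"
  proof (rule fvs.independent_if_scalars_zero[OF finS])
    fix f :: "(word \<Rightarrow> 'k) \<Rightarrow> 'k" and s assume z: "(\<Sum>s\<in>S. fscale (f s) s) = 0" and s: "s \<in> S"
    define c where "c R = (if R \<in> TB then f (phit A R) else 0)" for R
    have sc: "supp c \<subseteq> TB" unfolding supp_def c_def by auto
    have "lincomb c (phit A) = (\<Sum>s\<in>S. fscale (f s) s)" by (rule sumTB) (auto simp: c_def sc)
    then have "lincomb c (phit A) = (\<lambda>_. 0)" using z by (simp add: zero_fun_def)
    moreover have "finsupp_on (top_basis A) c" unfolding finsupp_on_def TB_def[symmetric]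
      using sc finTB finite_subset by blast
    ultimately have "c = (\<lambda>_. 0)" using phit_inj[OF fin] by blast
    moreover obtain R where "R \<in> TB" "s = phit A R" using s unfolding S_def by blast
    ultimately show "f s = 0" using fun_cong[of c "\<lambda>_. 0" R] unfolding c_def by simp
  qed
  have expand: "g = (\<Sum>w\<in>CB. fscale (g w) (delta_vec w))" if "supp g \<subseteq> CB" for g :: "word \<Rightarrow> 'k"
  proof (rule ext)
    fix w'
    have "(\<Sum>w\<in>CB. fscale (g w) (delta_vec w)) w' = (\<Sum>w\<in>CB. if w = w' then g w else 0)"
      unfolding fsum_apply fscale_def delta_vec_def by (rule sum.cong) auto
    also have "\<dots> = g w'" using finCB that unfolding supp_def by (auto simp: sum.delta')
    finally show "g w' = (\<Sum>w\<in>CB. fscale (g w) (delta_vec w)) w'" by simp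
  qed
  have inspanT: "g \<in> fvs.span T" if "supp g \<subseteq> CB" for g :: "word \<Rightarrow> 'k"
  proof -
    have "(\<Sum>w\<in>CB. fscale (g w) (delta_vec w)) \<in> fvs.span T"
      by (rule fvs.span_sum, rule fvs.span_scale, rule fvs.span_base) (auto simp: T_def)
    then show ?thesis using expand[OF that] by simp
  qed
  have ST: "S \<subseteq> fvs.span T"
  proof
    fix s assume "s \<in> S"
    then obtain R where "s = phit A R" by (auto simp: S_def)
    moreover have "supp (phit A R :: word \<Rightarrow> 'k) \<subseteq> CB" unfolding CB_def by (rule phit_supp)
    ultimately show "s \<in> fvs.span T" using inspanT by blast
  qed
  have TS: "T \<subseteq> fvs.span S"
  proof
    fix t assume tT: "t \<in> T"
    show "t \<in> fvs.span S"
    proof (rule ccontr)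
      assume nt: "t \<notin> fvs.span S"
      then have tS: "t \<notin> S" using fvs.span_base by blast
      have "fvs.independent (insert t S)" using fvs.independent_insertI[OF nt indep] .
      moreover have "insert t S \<subseteq> fvs.span T" using ST tT fvs.span_base by blast
      ultimately have "card (insert t S) \<le> card T" using fvs.independent_span_bound[OF finT] by blast
      then show False using cle tS finS by simp
    qed
  qed
  have "supp y \<subseteq> CB" using fy unfolding finsupp_on_def CB_def by blast
  then have "y \<in> fvs.span T" using inspanT by blast
  moreover have "fvs.span T \<subseteq> fvs.span S"
    using fvs.span_mono[OF TS] fvs.span_span by blast
  ultimately have "y \<in> fvs.span S" by blast
  then obtain u where u: "y = (\<Sum>s\<in>S. fscale (u s) s)" using fvs.span_finite[OF finS] by auto
  define c where "c R = (if R \<in> TB then u (phit A R) else 0)" for R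
  have sc: "supp c \<subseteq> TB" unfolding supp_def c_def by auto
  have "lincomb c (phit A) = y" unfolding u by (rule sumTB) (auto simp: c_def sc)
  moreover have "finsupp_on (top_basis A) c" unfolding finsupp_on_def TB_def[symmetric]
    using sc finTB finite_subset by blast
  ultimately show ?thesis by blast
qed

lemma phit_bij:
  assumes fin: "finite A"
  shows "bij_betw (\<lambda>x. lincomb x (phit A :: nat rel \<Rightarrow> word \<Rightarrow> 'k::field_char_0))
     {x. finsupp_on (top_basis A) x} {y. finsupp_on (cot_basis QBt A) y}"
  unfolding bij_betw_def
proof (intro conjI)
  define TB where "TB = top_basis A"
  have finTB: "finite TB" unfolding TB_def using finite_top_basis[OF fin] .
  show "inj_on (\<lambda>x. lincomb x (phit A :: nat rel \<Rightarrow> word \<Rightarrow> 'k)) {x. finsupp_on (top_basis A) x}"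
  proof (rule inj_onI)
    fix x x' :: "nat rel \<Rightarrow> 'k"
    assume x: "x \<in> {x. finsupp_on (top_basis A) x}" and x': "x' \<in> {x. finsupp_on (top_basis A) x}"
      and eq: "lincomb x (phit A) = lincomb x' (phit A)"
    have sx: "supp x \<subseteq> TB" "supp x' \<subseteq> TB" using x x' unfolding finsupp_on_def TB_def by auto
    define d where "d R = x R - x' R" for R
    have sd: "supp d \<subseteq> TB"
    proof
      fix R assume "R \<in> supp d"
      then have "x R \<noteq> x' R" unfolding supp_def d_def by simp
      then have "R \<in> supp x \<or> R \<in> supp x'" unfolding supp_def by auto
      then show "R \<in> TB" using sx by blast
    qed
    have "lincomb d (phit A) = (\<lambda>_. (0 :: 'k))"
    proof (rule ext)
      fix w
      have "lincomb d (phit A) w = (\<Sum>R\<in>TB. x R * phit A R w) - (\<Sum>R\<in>TB. x' R * phit A R w)"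
        unfolding lincomb_superset[OF finTB sd] d_def by (simp add: left_diff_distrib sum_subtractf)
      also have "\<dots> = lincomb x (phit A) w - lincomb x' (phit A) w"
        using lincomb_superset[OF finTB sx(1), of "phit A" w] lincomb_superset[OF finTB sx(2), of "phit A" w] by simp
      finally show "lincomb d (phit A) w = 0" using eq by simp
    qed
    moreover have "finsupp_on (top_basis A) d" unfolding finsupp_on_def TB_def[symmetric]
      using sd finTB finite_subset by blast
    ultimately have "d = (\<lambda>_. 0)" using phit_inj[OF fin] by blast
    then show "x = x'" unfolding d_def by (auto simp: fun_eq_iff)
  qed
  show "(\<lambda>x. lincomb x (phit A :: nat rel \<Rightarrow> word \<Rightarrow> 'k)) ` {x. finsupp_on (top_basis A) x} =
      {y. finsupp_on (cot_basis QBt A) y}"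
  proof
    show "(\<lambda>x. lincomb x (phit A :: nat rel \<Rightarrow> word \<Rightarrow> 'k)) ` {x. finsupp_on (top_basis A) x} \<subseteq>
        {y. finsupp_on (cot_basis QBt A) y}"
    proof
      fix y assume "y \<in> (\<lambda>x. lincomb x (phit A :: nat rel \<Rightarrow> word \<Rightarrow> 'k)) ` {x. finsupp_on (top_basis A) x}"
      then obtain x where y: "y = lincomb x (phit A)" by auto
      have "supp y \<subseteq> cot_basis QBt A"
      proof
        fix w assume "w \<in> supp y"
        then have "y w \<noteq> 0" unfolding supp_def by simp
        then have "\<exists>R\<in>supp x. (phit A R w :: 'k) \<noteq> 0" unfolding y lincomb_def
          by (metis (mono_tags, lifting) mult_zero_right sum.neutral)
        then show "w \<in> cot_basis QBt A" unfolding phit_def by (auto split: if_splits)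
      qed
      then show "y \<in> {y. finsupp_on (cot_basis QBt A) y}"
        unfolding finsupp_on_def using finite_cot_basis[OF fin] finite_subset by blast
    qed
    show "{y. finsupp_on (cot_basis QBt A) y} \<subseteq>
        (\<lambda>x. lincomb x (phit A :: nat rel \<Rightarrow> word \<Rightarrow> 'k)) ` {x. finsupp_on (top_basis A) x}"
      using phit_surj[OF fin] by blast
  qed
qed

theorem theorem42_aux:
  shows "\<exists>(QB :: nat set \<Rightarrow> nat set) (Qact :: (nat \<Rightarrow> nat) \<Rightarrow> nat set \<Rightarrow> nat \<Rightarrow> nat \<Rightarrow> 'k::field_char_0)
            (\<phi> :: nat set \<Rightarrow> nat rel \<Rightarrow> word \<Rightarrow> 'k).
           QB {} = {} \<and> species QB Qact \<and> top_cot_iso QB Qact \<phi>"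
proof (intro exI conjI)
  show "QBt {} = {}" by (rule QBt_empty)
  show "species QBt (Qactt :: _ \<Rightarrow> _ \<Rightarrow> _ \<Rightarrow> _ \<Rightarrow> 'k)" by (rule species_Q)
  show "top_cot_iso QBt (Qactt :: _ \<Rightarrow> _ \<Rightarrow> _ \<Rightarrow> _ \<Rightarrow> 'k) phit"
    unfolding top_cot_iso_def
  proof (intro conjI allI impI)
    fix A R assume "finite A \<and> R \<in> top_basis A"
    then show "finsupp_on (cot_basis QBt A) (phit A R :: word \<Rightarrow> 'k)" using phit_finsupp by blast
  next
    fix A :: "nat set" assume "finite A"
    then show "bij_betw (\<lambda>x. lincomb x (phit A :: nat rel \<Rightarrow> word \<Rightarrow> 'k))
        {x. finsupp_on (top_basis A) x} {y. finsupp_on (cot_basis QBt A) y}" by (rule phit_bij)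
  next
    fix A B :: "nat set" and \<sigma> R assume h: "finite A \<and> bij_betw \<sigma> A B \<and> R \<in> top_basis A"
    then show "(phit B (top_act \<sigma> R) :: word \<Rightarrow> 'k) = lincomb (phit A R) (cot_act Qactt \<sigma>)"
      using phit_natural by blast
  next
    show "(phit {} {} :: word \<Rightarrow> 'k) = delta_vec []" by (rule phit_unit)
  next
    fix A B :: "nat set" and R S assume h: "finite A \<and> finite B \<and> A \<inter> B = {} \<and> R \<in> top_basis A \<and> S \<in> top_basis B"
    then show "(phit (A \<union> B) (R \<union> S) :: word \<Rightarrow> 'k) = shuffle_prod (phit A R) (phit B S)"
      using phit_prod by blast
  next
    fix A B :: "nat set" and R assume h: "finite A \<and> finite B \<and> A \<inter> B = {} \<and> R \<in> top_basis (A \<union> B)"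
    then show "\<forall>u\<in>cot_basis QBt A. \<forall>v\<in>cot_basis QBt B.
        (phit (A \<union> B) R (u @ v) :: 'k) =
          (if upclosed R B then phit A (restr R A) u * phit B (restr R B) v else 0)"
      using phit_coprod by blast
  qed
qed


theorem theorem42:
  shows "\<exists>(QB :: nat set \<Rightarrow> nat set) (Qact :: (nat \<Rightarrow> nat) \<Rightarrow> nat set \<Rightarrow> nat \<Rightarrow> nat \<Rightarrow> 'k::field_char_0)
            (\<phi> :: nat set \<Rightarrow> nat rel \<Rightarrow> word \<Rightarrow> 'k).
           QB {} = {} \<and> species QB Qact \<and> top_cot_iso QB Qact \<phi>"
  by (rule theorem42_aux)

end
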